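(* Fix integers $M\ge N\ge1$ and $c_0,\dots,c_{N-1}>0$, and let $h_{\mathbf{c}}(z)=\sum_{j=0}^{N-1}c_jz^j$. Then for every $A\in\mathbb{P}_N(\mathbb{C})\setminus\{0\}$, $$\mathcal{C}(h_{\mathbf{c}};z^M;A)=\varrho\bigl(h_{\mathbf{c}}[A]^{\dagger/2}A^{\circ M}h_{\mathbf{c}}[A]^{\dagger/2}\bigr).$$ Moreover, if $A=\mathbf{u}\mathbf{u}^*$ with $\mathbf{u}\in\mathbb{C}^N$ having pairwise distinct coordinates, then $$\mathcal{C}(h_{\mathbf{c}};z^M;\mathbf{u}\mathbf{u}^* )=(\mathbf{u}^{\circ M})^*h_{\mathbf{c}}[\mathbf{u}\mathbf{u}^*]^\dagger\mathbf{u}^{\circ M}=\sum_{j=0}^{N-1}\frac{|s_{\mu(M,N,j)}(\mathbf{u})|^2}{c_j}.$$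
   Context: $\mathbb{P}_N(\mathbb{C})$ is the set of $N\times N$ Hermitian positive semidefinite matrices. $h[A]$ is entrywise application, $A^{\circ M}$ the entrywise power, $\mathbf{u}^{\circ M}=(u_i^M)$. $\mathcal{C}(h;g;A)$ is the smallest real $C$ with $g[A]\le C\,h[A]$ in the Loewner order. $C^\dagger$ is the Moore–Penrose inverse, $C^{\dagger/2}$ the principal square root of $C^\dagger$, and $\varrho(C)$ the spectral radius. $s_\lambda$ is the Schur polynomial and $\mu(M,N,j)=(M-N+1,1,\dots,1,0,\dots,0)$ the hook partition with $N-j-1$ ones and $j$ zeros. *)

theory Defs
  imports "Jordan_Normal_Form.Spectral_Radius"
begin

definition adj :: "complex mat \<Rightarrow> complex mat" where
  "adj A = mat (dim_col A) (dim_row A) (\<lambda>(i,j). cnj (A $$ (j,i)))"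

definition psd :: "nat \<Rightarrow> complex mat \<Rightarrow> bool" where
  "psd n A \<longleftrightarrow> A \<in> carrier_mat n n \<and> adj A = A \<and>
     (\<forall>v \<in> carrier_vec n. 0 \<le> Re (conjugate v \<bullet> (A *\<^sub>v v)))"

definition loewner_le :: "nat \<Rightarrow> complex mat \<Rightarrow> complex mat \<Rightarrow> bool" where
  "loewner_le n B C \<longleftrightarrow> B \<in> carrier_mat n n \<and> C \<in> carrier_mat n n \<and> psd n (C - B)"

definition entrywise :: "(complex \<Rightarrow> complex) \<Rightarrow> complex mat \<Rightarrow> complex mat" where
  "entrywise h A = map_mat h A"

definition crit_set :: "nat \<Rightarrow> (complex \<Rightarrow> complex) \<Rightarrow> (complex \<Rightarrow> complex) \<Rightarrow> complex mat \<Rightarrow> real set" where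
  "crit_set n h g A = {C. loewner_le n (entrywise g A) (complex_of_real C \<cdot>\<^sub>m entrywise h A)}"

definition crit_const :: "nat \<Rightarrow> (complex \<Rightarrow> complex) \<Rightarrow> (complex \<Rightarrow> complex) \<Rightarrow> complex mat \<Rightarrow> real" where
  "crit_const n h g A = Inf (crit_set n h g A)"

definition mp_inverse :: "complex mat \<Rightarrow> complex mat" where
  "mp_inverse A = (THE X. X \<in> carrier_mat (dim_col A) (dim_row A) \<and>
      A * X * A = A \<and> X * A * X = X \<and> adj (A * X) = A * X \<and> adj (X * A) = X * A)"

definition psd_sqrt :: "complex mat \<Rightarrow> complex mat" where
  "psd_sqrt A = (THE X. psd (dim_row A) X \<and> X * X = A)"

definition mp_half :: "complex mat \<Rightarrow> complex mat" where
  "mp_half A = psd_sqrt (mp_inverse A)"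

definition hc :: "nat \<Rightarrow> (nat \<Rightarrow> real) \<Rightarrow> complex \<Rightarrow> complex" where
  "hc N c z = (\<Sum>j<N. complex_of_real (c j) * z ^ j)"

definition outer :: "complex vec \<Rightarrow> complex mat" where
  "outer u = mat (dim_vec u) (dim_vec u) (\<lambda>(i,j). u $ i * cnj (u $ j))"

definition vpow :: "complex vec \<Rightarrow> nat \<Rightarrow> complex vec" where
  "vpow u M = map_vec (\<lambda>z. z ^ M) u"

text \<open>Evaluation of the Schur polynomial s_lambda in N variables at x (lambda given as a
  weakly decreasing sequence lam 0 >= ... >= lam (N-1)), via Jacobi's bialternant formula
  s_lambda = a_{lambda+delta} / a_delta. This is the value of the Schur polynomial whenever
  the coordinates of x are pairwise distinct (the only case used).\<close>
definition schur_eval :: "nat \<Rightarrow> (nat \<Rightarrow> nat) \<Rightarrow> (nat \<Rightarrow> complex) \<Rightarrow> complex" where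
  "schur_eval N lam x =
     det (mat N N (\<lambda>(i,j). x i ^ (lam j + (N - 1 - j)))) /
     det (mat N N (\<lambda>(i,j). x i ^ (N - 1 - j)))"

definition hook :: "nat \<Rightarrow> nat \<Rightarrow> nat \<Rightarrow> nat \<Rightarrow> nat" where
  "hook M N j k = (if k = 0 then M - N + 1 else if k \<le> N - j - 1 then 1 else 0)"

end

theory Submission
  imports Defs
begin

lemma mult_entry:
  assumes "A \<in> carrier_mat n k" "B \<in> carrier_mat k m" "i < n" "j < m"
  shows "(A * B) $$ (i,j) = (\<Sum>l<k. A $$ (i,l) * B $$ (l,j))"
  using assms by (auto simp: scalar_prod_def atLeast0LessThan intro!: sum.cong)

lemma mult_vec_entry:
  assumes "A \<in> carrier_mat n k" "v \<in> carrier_vec k" "i < n"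
  shows "(A *\<^sub>v v) $ i = (\<Sum>l<k. A $$ (i,l) * v $ l)"
  using assms by (auto simp: scalar_prod_def atLeast0LessThan intro!: sum.cong)

lemma adj_dims[simp]: "dim_row (adj A) = dim_col A" "dim_col (adj A) = dim_row A"
  by (auto simp: adj_def)

lemma adj_carrier[simp]: "A \<in> carrier_mat n m \<Longrightarrow> adj A \<in> carrier_mat m n"
  by (auto simp: adj_def)

lemma adj_index[simp]: "i < dim_col A \<Longrightarrow> j < dim_row A \<Longrightarrow> adj A $$ (i,j) = cnj (A $$ (j,i))"
  by (auto simp: adj_def)

lemma adj_adj[simp]: "adj (adj A) = A"
  by (rule eq_matI) auto

lemma adj_mult:
  assumes "A \<in> carrier_mat n k" "B \<in> carrier_mat k m"
  shows "adj (A * B) = adj B * adj A"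
proof (rule eq_matI)
  fix i j assume ij: "i < dim_row (adj B * adj A)" "j < dim_col (adj B * adj A)"
  hence i: "i < m" and j: "j < n" using assms by auto
  have "adj (A * B) $$ (i,j) = cnj ((A*B) $$ (j,i))" using assms i j by auto
  also have "\<dots> = (\<Sum>l<k. cnj (B $$ (l,i)) * cnj (A $$ (j,l)))"
    by (subst mult_entry[OF assms(1,2) j i]) (simp add: cnj_sum mult.commute)
  also have "\<dots> = (adj B * adj A) $$ (i,j)"
    by (subst mult_entry[of _ m k _ n]) (use assms i j in auto)
  finally show "adj (A * B) $$ (i,j) = (adj B * adj A) $$ (i,j)" .
qed (use assms in auto)

lemma adj_one[simp]: "adj (1\<^sub>m n) = 1\<^sub>m n"
  by (rule eq_matI) auto

lemma adj_add: "A \<in> carrier_mat n m \<Longrightarrow> B \<in> carrier_mat n m \<Longrightarrow> adj (A + B) = adj A + adj B"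
  by (rule eq_matI) auto

lemma adj_minus: "A \<in> carrier_mat n m \<Longrightarrow> B \<in> carrier_mat n m \<Longrightarrow> adj (A - B) = adj A - adj B"
  by (rule eq_matI) auto

lemma adj_smult: "adj (a \<cdot>\<^sub>m A) = cnj a \<cdot>\<^sub>m adj A"
  by (rule eq_matI) auto

definition unitary :: "nat \<Rightarrow> complex mat \<Rightarrow> bool" where
  "unitary n U \<longleftrightarrow> U \<in> carrier_mat n n \<and> adj U * U = 1\<^sub>m n \<and> U * adj U = 1\<^sub>m n"

definition dmat :: "nat \<Rightarrow> (nat \<Rightarrow> real) \<Rightarrow> complex mat" where
  "dmat n d = mat n n (\<lambda>(i,j). if i = j then complex_of_real (d i) else 0)"

lemma dmat_carrier[simp]: "dmat n d \<in> carrier_mat n n"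
  by (simp add: dmat_def)

lemma dmat_index[simp]: "i < n \<Longrightarrow> j < n \<Longrightarrow> dmat n d $$ (i,j) = (if i = j then complex_of_real (d i) else 0)"
  by (simp add: dmat_def)

lemma dmat_dims[simp]: "dim_row (dmat n d) = n" "dim_col (dmat n d) = n"
  by (auto simp: dmat_def)

lemma adj_dmat[simp]: "adj (dmat n d) = dmat n d"
  by (rule eq_matI) auto

lemma dmat_mult: "dmat n d * dmat n e = dmat n (\<lambda>i. d i * e i)"
proof (rule eq_matI)
  fix i j assume "i < dim_row (dmat n (\<lambda>i. d i * e i))" "j < dim_col (dmat n (\<lambda>i. d i * e i))"
  hence i: "i < n" and j: "j < n" by auto
  have "(dmat n d * dmat n e) $$ (i,j) = (\<Sum>l<n. dmat n d $$ (i,l) * dmat n e $$ (l,j))"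
    using i j by (intro mult_entry) auto
  also have "\<dots> = (\<Sum>l\<in>{i}. dmat n d $$ (i,l) * dmat n e $$ (l,j))"
    by (rule sum.mono_neutral_right) (use i j in auto)
  also have "\<dots> = dmat n (\<lambda>i. d i * e i) $$ (i,j)" using i j by auto
  finally show "(dmat n d * dmat n e) $$ (i,j) = dmat n (\<lambda>i. d i * e i) $$ (i,j)" .
qed auto

definition ext :: "complex \<Rightarrow> complex mat \<Rightarrow> complex mat" where
  "ext e X = mat (Suc (dim_row X)) (Suc (dim_col X))
     (\<lambda>(i,j). if i = 0 then (if j = 0 then e else 0) else if j = 0 then 0 else X $$ (i-1,j-1))"

lemma ext_carrier[simp]: "X \<in> carrier_mat m k \<Longrightarrow> ext e X \<in> carrier_mat (Suc m) (Suc k)"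
  by (auto simp: ext_def)

lemma ext_dims[simp]: "dim_row (ext e X) = Suc (dim_row X)" "dim_col (ext e X) = Suc (dim_col X)"
  by (auto simp: ext_def)

lemma ext_index: "i < Suc (dim_row X) \<Longrightarrow> j < Suc (dim_col X) \<Longrightarrow> ext e X $$ (i,j) =
   (if i = 0 then (if j = 0 then e else 0) else if j = 0 then 0 else X $$ (i-1,j-1))"
  by (auto simp: ext_def)

lemma ext_mult:
  assumes X: "X \<in> carrier_mat m k" and Y: "Y \<in> carrier_mat k l"
  shows "ext e X * ext f Y = ext (e * f) (X * Y)"
proof (rule eq_matI)
  fix i j assume "i < dim_row (ext (e * f) (X * Y))" "j < dim_col (ext (e * f) (X * Y))"
  hence i: "i < Suc m" and j: "j < Suc l" using X Y by auto
  have "(ext e X * ext f Y) $$ (i,j) = (\<Sum>p<Suc k. ext e X $$ (i,p) * ext f Y $$ (p,j))"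
    by (rule mult_entry) (use X Y i j in auto)
  also have "\<dots> = ext e X $$ (i,0) * ext f Y $$ (0,j) + (\<Sum>p<k. ext e X $$ (i,Suc p) * ext f Y $$ (Suc p,j))"
    by (subst sum.lessThan_Suc_shift) simp
  also have "\<dots> = ext (e * f) (X * Y) $$ (i,j)"
  proof (cases "i = 0")
    case True
    then show ?thesis using X Y i j by (auto simp: ext_index)
  next
    case False
    then obtain i' where i': "i = Suc i'" by (cases i) auto
    show ?thesis
    proof (cases "j = 0")
      case True
      then show ?thesis using X Y i j i' by (auto simp: ext_index)
    next
      case False
      then obtain j' where j': "j = Suc j'" by (cases j) auto
      have "(X * Y) $$ (i', j') = (\<Sum>p<k. X $$ (i',p) * Y $$ (p,j'))"
        by (rule mult_entry) (use X Y i j i' j' in auto)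
      then show ?thesis using X Y i j i' j' by (auto simp: ext_index)
    qed
  qed
  finally show "(ext e X * ext f Y) $$ (i,j) = ext (e * f) (X * Y) $$ (i,j)" .
qed (use X Y in auto)

lemma adj_ext: "adj (ext e X) = ext (cnj e) (adj X)"
  by (rule eq_matI) (auto simp: ext_index)

lemma ext_one: "ext 1 (1\<^sub>m m) = 1\<^sub>m (Suc m)"
  by (rule eq_matI) (auto simp: ext_index)

lemma ext_dmat: "ext (complex_of_real a) (dmat m d) = dmat (Suc m) (\<lambda>i. if i = 0 then a else d (i - 1))"
  by (rule eq_matI) (auto simp: ext_index)

lemma unitary_ext: assumes "unitary m U" shows "unitary (Suc m) (ext 1 U)"
proof -
  have U: "U \<in> carrier_mat m m" using assms unitary_def by auto
  show ?thesis using assms unfolding unitary_def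
    by (auto simp: adj_ext ext_mult[OF adj_carrier[OF U] U] ext_mult[OF U adj_carrier[OF U]] ext_one)
qed

lemma unitary_mult: assumes "unitary n U" "unitary n V" shows "unitary n (U * V)"
proof -
  have U: "U \<in> carrier_mat n n" and V: "V \<in> carrier_mat n n" using assms unitary_def by auto
  have "adj (U * V) * (U * V) = adj V * (adj U * U) * V"
    using U V by (simp add: adj_mult assoc_mult_mat[of _ n n _ n _ n] mult_carrier_mat[of _ n n _ n])
  also have "\<dots> = 1\<^sub>m n" using assms U V unfolding unitary_def by simp
  finally have 1: "adj (U * V) * (U * V) = 1\<^sub>m n" .
  have "(U * V) * adj (U * V) = U * (V * adj V) * adj U"
    using U V by (simp add: adj_mult assoc_mult_mat[of _ n n _ n _ n] mult_carrier_mat[of _ n n _ n])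
  also have "\<dots> = 1\<^sub>m n" using assms U V unfolding unitary_def by simp
  finally show ?thesis using 1 U V unfolding unitary_def by auto
qed

lemma unitary_cancel1: "unitary n U \<Longrightarrow> X \<in> carrier_mat n k \<Longrightarrow> U * (adj U * X) = X"
  unfolding unitary_def by (simp add: assoc_mult_mat[of _ n n _ n _ k, symmetric])
lemma unitary_cancel2: "unitary n U \<Longrightarrow> X \<in> carrier_mat n k \<Longrightarrow> adj U * (U * X) = X"
  unfolding unitary_def by (simp add: assoc_mult_mat[of _ n n _ n _ k, symmetric])

lemma cscalar_expand: "v \<in> carrier_vec n \<Longrightarrow> w \<in> carrier_vec n \<Longrightarrow> v \<bullet>c w = (\<Sum>k<n. v $ k * cnj (w $ k))"
  by (auto simp: scalar_prod_def atLeast0LessThan intro!: sum.cong)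

theorem hermitian_decomp:
  "A \<in> carrier_mat n n \<Longrightarrow> adj A = A \<Longrightarrow> \<exists>U d. unitary n U \<and> A = U * dmat n d * adj U"
proof (induction n arbitrary: A)
  case 0
  show ?case
    by (rule exI[of _ "1\<^sub>m 0"], rule exI[of _ "\<lambda>_. 0"]) (use 0 in \<open>auto simp: unitary_def intro!: eq_matI\<close>)
next
  case (Suc m A)
  define n where "n = Suc m"
  have A: "A \<in> carrier_mat n n" and hA: "adj A = A" using Suc n_def by auto
  obtain e where "e \<in> spectrum A" using spectrum_non_empty[OF A] n_def by auto
  then obtain v where "eigenvector A v e" unfolding spectrum_def eigenvalue_def by auto
  hence v: "v \<in> carrier_vec n" and v0: "v \<noteq> 0\<^sub>v n" and Av: "A *\<^sub>v v = e \<cdot>\<^sub>v v"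
    unfolding eigenvector_def using A by auto
  interpret cof_vec_space n "TYPE(complex)" .
  define b where "b = basis_completion v"
  note bc = basis_completion[OF v v0, folded b_def]
  define ws where "ws = gram_schmidt n b"
  note gs = gram_schmidt_result[OF bc(2) bc(4) bc(5) ws_def]
  have lws: "length ws = n" using gs(4) bc(6) by simp
  have wsc: "\<And>j. j < n \<Longrightarrow> ws ! j \<in> carrier_vec n" using gs(3) lws by auto
  from bc(6,7) n_def obtain vs where bv: "b = v # vs" by (cases b) auto
  have hdws: "hd ws = v" unfolding ws_def bv using gram_schmidt_hd[OF v] .
  have ws0: "ws ! 0 = v" using hdws lws n_def by (cases ws) auto
  define nr where "nr j = sqrt (\<Sum>k<n. (cmod (ws ! j $ k))^2)" for j
  have nrsq: "ws ! j \<bullet>c ws ! j = complex_of_real ((nr j)^2)" if j: "j < n" for j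
  proof -
    have "ws ! j \<bullet>c ws ! j = (\<Sum>k<n. ws ! j $ k * cnj (ws ! j $ k))"
      using cscalar_expand[OF wsc[OF j] wsc[OF j]] .
    also have "\<dots> = complex_of_real (\<Sum>k<n. (cmod (ws ! j $ k))^2)"
      by (simp only: of_real_sum complex_norm_square)
    also have "\<dots> = complex_of_real ((nr j)^2)" unfolding nr_def by (simp add: sum_nonneg)
    finally show ?thesis .
  qed
  have nrpos: "nr j \<noteq> 0" if j: "j < n" for j
  proof
    assume "nr j = 0"
    hence "ws ! j \<bullet>c ws ! j = 0" using nrsq[OF j] by simp
    thus False using corthogonalD[OF gs(2), of j j] j lws by auto
  qed
  define W where "W = mat n n (\<lambda>(i,j). ws ! j $ i / complex_of_real (nr j))"
  have W: "W \<in> carrier_mat n n" unfolding W_def by auto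
  have WW: "adj W * W = 1\<^sub>m n"
  proof (rule eq_matI)
    fix i j assume "i < dim_row (1\<^sub>m n)" "j < dim_col (1\<^sub>m n)"
    hence i: "i < n" and j: "j < n" by auto
    have "(adj W * W) $$ (i,j) = (\<Sum>k<n. cnj (ws ! i $ k / complex_of_real (nr i)) * (ws ! j $ k / complex_of_real (nr j)))"
      by (subst mult_entry[of _ n n _ n]) (use W i j in \<open>auto simp: W_def\<close>)
    also have "\<dots> = (ws ! j \<bullet>c ws ! i) / (complex_of_real (nr i) * complex_of_real (nr j))"
      unfolding cscalar_expand[OF wsc[OF j] wsc[OF i]] sum_divide_distrib
      by (rule sum.cong) (auto simp: field_simps)
    also have "\<dots> = 1\<^sub>m n $$ (i,j)"
    proof (cases "i = j")
      case True
      then show ?thesis using i nrsq[OF i] nrpos[OF i] by (simp add: power2_eq_square)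
    next
      case False
      then show ?thesis using corthogonalD[OF gs(2), of j i] i j lws by auto
    qed
    finally show "(adj W * W) $$ (i,j) = 1\<^sub>m n $$ (i,j)" .
  qed (use W in auto)
  have WW2: "W * adj W = 1\<^sub>m n" using mat_mult_left_right_inverse[OF adj_carrier[OF W] W WW] .
  have uW: "unitary n W" using W WW WW2 unfolding unitary_def by auto
  define A' where "A' = adj W * A * W"
  have A': "A' \<in> carrier_mat n n" unfolding A'_def using A W by auto
  have hA': "adj A' = A'" unfolding A'_def using A W hA
    by (simp add: adj_mult[of _ n n _ n] mult_carrier_mat[of _ n n _ n] assoc_mult_mat[of _ n n _ n _ n])
  have AW: "(A * W) $$ (k,0) = e * W $$ (k,0)" if k: "k < n" for k
  proof -
    have "(A * W) $$ (k,0) = (\<Sum>l<n. A $$ (k,l) * v $ l) / complex_of_real (nr 0)"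
      unfolding sum_divide_distrib
      by (subst mult_entry[OF A W k]) (use n_def ws0 in \<open>auto simp: W_def\<close>)
    also have "\<dots> = (A *\<^sub>v v) $ k / complex_of_real (nr 0)"
      using mult_vec_entry[OF A v k] by simp
    also have "\<dots> = e * W $$ (k,0)" unfolding Av using k v ws0 n_def by (auto simp: W_def)
    finally show ?thesis .
  qed
  have A'col: "A' $$ (i,0) = (if i = 0 then e else 0)" if i: "i < n" for i
  proof -
    have "A' = adj W * (A * W)" unfolding A'_def using A W by (simp add: assoc_mult_mat[of _ n n _ n _ n])
    hence "A' $$ (i,0) = (\<Sum>k<n. adj W $$ (i,k) * (A * W) $$ (k,0))"
      using mult_entry[OF adj_carrier[OF W] mult_carrier_mat[OF A W] i, of 0] n_def by simp
    also have "\<dots> = e * (\<Sum>k<n. adj W $$ (i,k) * W $$ (k,0))"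
      by (simp add: AW sum_distrib_left ac_simps)
    also have "\<dots> = e * (adj W * W) $$ (i,0)"
      by (subst mult_entry[of _ n n _ n]) (use W i n_def in auto)
    also have "\<dots> = (if i = 0 then e else 0)" using WW i n_def by simp
    finally show ?thesis .
  qed
  have A'row: "A' $$ (0,j) = cnj (A' $$ (j,0))" if j: "j < n" for j
  proof -
    have "A' $$ (0,j) = adj A' $$ (0,j)" using hA' by simp
    also have "\<dots> = cnj (A' $$ (j,0))" using A' j n_def by simp
    finally show ?thesis .
  qed
  have ce: "cnj e = e" using A'row[of 0] A'col[of 0] n_def by simp
  have ereal: "e = complex_of_real (Re e)"
    using ce by (auto simp: complex_eq_iff)
  define A3 where "A3 = mat m m (\<lambda>(i,j). A' $$ (Suc i, Suc j))"
  have A3: "A3 \<in> carrier_mat m m" unfolding A3_def by auto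
  have hA3: "adj A3 = A3"
  proof (rule eq_matI)
    fix i j assume "i < dim_row A3" "j < dim_col A3"
    hence i: "i < m" and j: "j < m" using A3 by auto
    have "adj A3 $$ (i,j) = cnj (A' $$ (Suc j, Suc i))" using i j by (simp add: A3_def)
    also have "\<dots> = adj A' $$ (Suc i, Suc j)" using A' i j n_def by simp
    finally show "adj A3 $$ (i,j) = A3 $$ (i,j)" using hA' i j by (simp add: A3_def)
  qed (use A3 in auto)
  obtain U3 d3 where uU3: "unitary m U3" and A3d: "A3 = U3 * dmat m d3 * adj U3"
    using Suc.IH[OF A3 hA3] by auto
  have U3: "U3 \<in> carrier_mat m m" using uU3 unitary_def by auto
  have A'ext: "A' = ext e A3"
  proof (rule eq_matI)
    fix i j assume "i < dim_row (ext e A3)" "j < dim_col (ext e A3)"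
    hence i: "i < n" and j: "j < n" using A3 n_def by auto
    show "A' $$ (i,j) = ext e A3 $$ (i,j)"
    proof (cases "i = 0")
      case True
      then show ?thesis using A'row[OF j] A'col[OF j] A3 j n_def ereal
        by (auto simp: ext_index ce)
    next
      case False
      then show ?thesis using A'col[OF i] A3 i j n_def by (cases j) (auto simp: ext_index A3_def)
    qed
  qed (use A' A3 n_def in auto)
  define E where "E = ext 1 U3"
  have uE: "unitary n E" unfolding E_def n_def using unitary_ext[OF uU3] .
  have E: "E \<in> carrier_mat n n" using uE unitary_def by auto
  define d where "d i = (if i = 0 then Re e else d3 (i - 1))" for i
  have "A' = E * dmat n d * adj E"
  proof -
    have "A' = ext (1 * complex_of_real (Re e) * 1) (U3 * dmat m d3 * adj U3)"
      using A'ext A3d ereal by simp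
    also have "\<dots> = E * ext (complex_of_real (Re e)) (dmat m d3) * ext 1 (adj U3)"
      unfolding E_def using U3 by (simp add: ext_mult[of _ m m _ m])
    also have "\<dots> = E * dmat n d * adj E"
      unfolding ext_dmat E_def adj_ext n_def d_def by simp
    finally show ?thesis .
  qed
  hence h: "adj W * (A * W) = E * dmat n d * adj E"
    unfolding A'_def using A W by (simp add: assoc_mult_mat[of _ n n _ n _ n])
  have "W * (E * dmat n d * adj E) * adj W = W * (adj W * (A * W)) * adj W" using h by simp
  also have "\<dots> = A * W * adj W" using unitary_cancel1[OF uW, of "A*W" n] A W by simp
  also have "\<dots> = A" using A W WW2 by (simp add: assoc_mult_mat[OF A W adj_carrier[OF W]])
  finally have "A = W * (E * dmat n d * adj E) * adj W" by simp
  also have "\<dots> = (W * E) * dmat n d * adj (W * E)"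
    using W E by (simp add: adj_mult[of _ n n _ n] assoc_mult_mat[of _ n n _ n _ n] mult_carrier_mat[of _ n n _ n])
  finally show ?case using unitary_mult[OF uW uE] n_def by blast
qed

lemma adj_sprod:
  assumes A: "A \<in> carrier_mat n k" and v: "v \<in> carrier_vec n" and w: "w \<in> carrier_vec k"
  shows "conjugate v \<bullet> (A *\<^sub>v w) = conjugate (adj A *\<^sub>v v) \<bullet> w"
proof -
  have "conjugate v \<bullet> (A *\<^sub>v w) = (\<Sum>i<n. cnj (v $ i) * (\<Sum>l<k. A $$ (i,l) * w $ l))"
    using A v w by (auto simp: scalar_prod_def atLeast0LessThan mult_vec_entry intro!: sum.cong)
  also have "\<dots> = (\<Sum>l<k. (\<Sum>i<n. cnj (v $ i) * A $$ (i,l)) * w $ l)"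
    by (simp add: sum_distrib_left sum_distrib_right ac_simps) (rule sum.swap)
  also have "\<dots> = conjugate (adj A *\<^sub>v v) \<bullet> w"
    using A v w by (auto simp: scalar_prod_def atLeast0LessThan mult_vec_entry[OF adj_carrier[OF A] v]
        cnj_sum ac_simps intro!: sum.cong)
  finally show ?thesis .
qed

lemma unitary_carrier: "unitary n U \<Longrightarrow> U \<in> carrier_mat n n"
  by (simp add: unitary_def)

definition udu :: "nat \<Rightarrow> complex mat \<Rightarrow> (nat \<Rightarrow> real) \<Rightarrow> complex mat" where
  "udu n U d = U * dmat n d * adj U"

lemma udu_carrier[simp]: "unitary n U \<Longrightarrow> udu n U d \<in> carrier_mat n n"
  unfolding udu_def by (frule unitary_carrier) (metis adj_carrier dmat_carrier mult_carrier_mat)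

lemma adj_udu: "unitary n U \<Longrightarrow> adj (udu n U d) = udu n U d"
  unfolding udu_def by (frule unitary_carrier)
    (simp add: adj_mult[of _ n n _ n] mult_carrier_mat[of _ n n _ n] assoc_mult_mat[of _ n n _ n _ n])

lemma udu_mult: assumes U: "unitary n U"
  shows "udu n U d * udu n U e = udu n U (\<lambda>i. d i * e i)"
proof -
  have Uc: "U \<in> carrier_mat n n" using U unitary_carrier by auto
  have "udu n U d * udu n U e = U * (dmat n d * ((adj U * U) * (dmat n e * adj U)))"
    unfolding udu_def using Uc
    by (simp add: mult_carrier_mat[of _ n n _ n] assoc_mult_mat[of _ n n _ n _ n])
  also have "\<dots> = U * (dmat n d * dmat n e * adj U)"
    using U Uc unfolding unitary_def by (simp add: assoc_mult_mat[of _ n n _ n _ n])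
  also have "\<dots> = udu n U (\<lambda>i. d i * e i)" unfolding udu_def dmat_mult
    using Uc by (simp add: assoc_mult_mat[of _ n n _ n _ n])
  finally show ?thesis .
qed

lemma udu_entry: assumes U: "U \<in> carrier_mat n n" and i: "i < n" and j: "j < n"
  shows "(U * dmat n d * adj U) $$ (i,j) = (\<Sum>l<n. U $$ (i,l) * complex_of_real (d l) * cnj (U $$ (j,l)))"
proof -
  have ud: "(U * dmat n d) $$ (i,l) = U $$ (i,l) * complex_of_real (d l)" if "i < n" "l < n" for i l
  proof -
    have "(U * dmat n d) $$ (i,l) = (\<Sum>p<n. U $$ (i,p) * dmat n d $$ (p,l))"
      by (rule mult_entry) (use U that in auto)
    also have "\<dots> = (\<Sum>p\<in>{l}. U $$ (i,p) * dmat n d $$ (p,l))"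
      by (rule sum.mono_neutral_right) (use that in auto)
    finally show ?thesis using that by simp
  qed
  show ?thesis
    by (subst mult_entry[of _ n n _ n]) (use U i j ud in auto)
qed

lemma qf_udu: assumes U: "unitary n U" and v: "v \<in> carrier_vec n"
  shows "conjugate v \<bullet> (udu n U d *\<^sub>v v) =
     (\<Sum>i<n. complex_of_real (d i * (cmod ((adj U *\<^sub>v v) $ i))^2))"
proof -
  have Uc: "U \<in> carrier_mat n n" using U unitary_carrier by auto
  define y where "y = adj U *\<^sub>v v"
  have y: "y \<in> carrier_vec n" using mult_mat_vec_carrier[OF adj_carrier[OF Uc] v] y_def by auto
  have "udu n U d *\<^sub>v v = U *\<^sub>v (dmat n d *\<^sub>v y)"
    unfolding udu_def y_def using Uc v
    by (simp add: assoc_mult_mat_vec[of _ n n _ n] mult_carrier_mat[of _ n n _ n]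
       mult_mat_vec_carrier[OF adj_carrier[OF Uc] v])
  hence "conjugate v \<bullet> (udu n U d *\<^sub>v v) = conjugate y \<bullet> (dmat n d *\<^sub>v y)"
    using adj_sprod[OF Uc v, of "dmat n d *\<^sub>v y"] mult_mat_vec_carrier[OF dmat_carrier y] y_def by simp
  also have "\<dots> = (\<Sum>i<n. cnj (y $ i) * (complex_of_real (d i) * y $ i))"
  proof -
    have "(dmat n d *\<^sub>v y) $ i = complex_of_real (d i) * y $ i" if i: "i < n" for i
    proof -
      have "(dmat n d *\<^sub>v y) $ i = (\<Sum>l<n. dmat n d $$ (i,l) * y $ l)"
        by (rule mult_vec_entry) (use y i in auto)
      also have "\<dots> = (\<Sum>l\<in>{i}. dmat n d $$ (i,l) * y $ l)"
        by (rule sum.mono_neutral_right) (use i in auto)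
      finally show ?thesis using i by simp
    qed
    thus ?thesis using y by (auto simp: scalar_prod_def atLeast0LessThan intro!: sum.cong)
  qed
  also have "\<dots> = (\<Sum>i<n. complex_of_real (d i * (cmod (y $ i))^2))"
    by (rule sum.cong, simp, simp only: of_real_mult complex_norm_square, simp add: ac_simps)
  finally show ?thesis unfolding y_def .
qed

lemma psd_udu: assumes U: "unitary n U" and d: "\<forall>i<n. d i \<ge> 0"
  shows "psd n (udu n U d)"
  unfolding psd_def using U adj_udu[OF U] qf_udu[OF U] d
  by (auto simp: Re_sum intro!: sum_nonneg)

lemma psd_decomp: assumes "psd n A"
  shows "\<exists>U d. unitary n U \<and> A = udu n U d \<and> (\<forall>i<n. d i \<ge> 0)"
proof -
  have A: "A \<in> carrier_mat n n" and hA: "adj A = A" using assms psd_def by auto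
  obtain U d where U: "unitary n U" and Ad: "A = U * dmat n d * adj U"
    using hermitian_decomp[OF A hA] by auto
  have Uc: "U \<in> carrier_mat n n" using U unitary_carrier by auto
  have "d i \<ge> 0" if i: "i < n" for i
  proof -
    define v where "v = U *\<^sub>v unit_vec n i"
    have v: "v \<in> carrier_vec n" using Uc v_def by auto
    have y: "adj U *\<^sub>v v = unit_vec n i"
      unfolding v_def using U Uc by (simp add: assoc_mult_mat_vec[symmetric, of _ n n _ n] unitary_def)
    have "0 \<le> Re (conjugate v \<bullet> (A *\<^sub>v v))" using assms v unfolding psd_def by auto
    also have "conjugate v \<bullet> (A *\<^sub>v v) = (\<Sum>l<n. complex_of_real (d l * (cmod (unit_vec n i $ l))^2))"
      using qf_udu[OF U v, of d] Ad y unfolding udu_def by simp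
    also have "\<dots> = (\<Sum>l\<in>{i}. complex_of_real (d l * (cmod (unit_vec n i $ l))^2))"
      by (rule sum.mono_neutral_right) (use i in auto)
    finally show ?thesis using i by simp
  qed
  thus ?thesis using U Ad unfolding udu_def by auto
qed

definition gram :: "nat \<Rightarrow> 'k set \<Rightarrow> ('k \<Rightarrow> nat \<Rightarrow> complex) \<Rightarrow> complex mat" where
  "gram n K w = mat n n (\<lambda>(i,j). \<Sum>k\<in>K. w k i * cnj (w k j))"

lemma gram_carrier[simp]: "gram n K w \<in> carrier_mat n n"
  by (simp add: gram_def)

lemma gram_dims[simp]: "dim_row (gram n K w) = n" "dim_col (gram n K w) = n"
  by (auto simp: gram_def)

lemma gram_index[simp]: "i < n \<Longrightarrow> j < n \<Longrightarrow> gram n K w $$ (i,j) = (\<Sum>k\<in>K. w k i * cnj (w k j))"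
  by (simp add: gram_def)

lemma qf_gram: assumes v: "v \<in> carrier_vec n"
  shows "conjugate v \<bullet> (gram n K w *\<^sub>v v) =
    complex_of_real (\<Sum>k\<in>K. (cmod (\<Sum>j<n. cnj (w k j) * v $ j))^2)"
proof -
  have "conjugate v \<bullet> (gram n K w *\<^sub>v v) = (\<Sum>i<n. cnj (v $ i) * (\<Sum>j<n. (\<Sum>k\<in>K. w k i * cnj (w k j)) * v $ j))"
    using v by (auto simp: scalar_prod_def atLeast0LessThan mult_vec_entry[OF gram_carrier v] intro!: sum.cong)
  also have "\<dots> = (\<Sum>k\<in>K. (\<Sum>i<n. cnj (v $ i) * w k i) * (\<Sum>j<n. cnj (w k j) * v $ j))"
  proof -
    have "(\<Sum>i<n. cnj (v $ i) * (\<Sum>j<n. (\<Sum>k\<in>K. w k i * cnj (w k j)) * v $ j))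
        = (\<Sum>i<n. \<Sum>j<n. \<Sum>k\<in>K. cnj (v $ i) * w k i * (cnj (w k j) * v $ j))"
      by (simp add: sum_distrib_left sum_distrib_right ac_simps)
    also have "\<dots> = (\<Sum>i<n. \<Sum>k\<in>K. \<Sum>j<n. cnj (v $ i) * w k i * (cnj (w k j) * v $ j))"
      by (rule sum.cong[OF refl], rule sum.swap)
    also have "\<dots> = (\<Sum>k\<in>K. \<Sum>i<n. \<Sum>j<n. cnj (v $ i) * w k i * (cnj (w k j) * v $ j))"
      by (rule sum.swap)
    also have "\<dots> = (\<Sum>k\<in>K. (\<Sum>i<n. cnj (v $ i) * w k i) * (\<Sum>j<n. cnj (w k j) * v $ j))"
      by (simp add: sum_product)
    finally show ?thesis .
  qed
  also have "\<dots> = (\<Sum>k\<in>K. complex_of_real ((cmod (\<Sum>j<n. cnj (w k j) * v $ j))^2))"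
  proof (rule sum.cong[OF refl])
    fix k
    have "(\<Sum>i<n. cnj (v $ i) * w k i) = cnj (\<Sum>j<n. cnj (w k j) * v $ j)"
      by (simp add: cnj_sum ac_simps)
    thus "(\<Sum>i<n. cnj (v $ i) * w k i) * (\<Sum>j<n. cnj (w k j) * v $ j) =
      complex_of_real ((cmod (\<Sum>j<n. cnj (w k j) * v $ j))^2)"
      by (simp only: complex_norm_square) (simp add: ac_simps)
  qed
  also have "\<dots> = complex_of_real (\<Sum>k\<in>K. (cmod (\<Sum>j<n. cnj (w k j) * v $ j))^2)"
    by simp
  finally show ?thesis .
qed

lemma psd_gram: "psd n (gram n K w)"
proof -
  have "adj (gram n K w) = gram n K w"
    by (rule eq_matI) (auto simp: cnj_sum mult.commute)
  moreover have "0 \<le> Re (conjugate v \<bullet> (gram n K w *\<^sub>v v))" if "v \<in> carrier_vec n" for v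
    by (subst qf_gram[OF that], subst Re_complex_of_real, rule sum_nonneg, simp)
  ultimately show ?thesis unfolding psd_def by auto
qed

lemma psd_gram_decomp: assumes "psd n A"
  shows "\<exists>w. A = gram n {..<n} w"
proof -
  obtain U d where U: "unitary n U" and A: "A = udu n U d" and d: "\<forall>i<n. d i \<ge> 0"
    using psd_decomp[OF assms] by auto
  have Uc: "U \<in> carrier_mat n n" using U unitary_carrier by auto
  define w where "w k i = complex_of_real (sqrt (d k)) * U $$ (i,k)" for k i
  have "A = gram n {..<n} w"
  proof (rule eq_matI)
    fix i j assume "i < dim_row (gram n {..<n} w)" "j < dim_col (gram n {..<n} w)"
    hence i: "i < n" and j: "j < n" by auto
    have "A $$ (i,j) = (\<Sum>l<n. U $$ (i,l) * complex_of_real (d l) * cnj (U $$ (j,l)))"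
      unfolding A udu_def using udu_entry[OF Uc i j] .
    also have "\<dots> = gram n {..<n} w $$ (i,j)"
    proof -
      have "complex_of_real (d l) = complex_of_real (sqrt (d l)) * complex_of_real (sqrt (d l))" if "l < n" for l
        using d that by (simp flip: of_real_mult)
      thus ?thesis using i j unfolding w_def by (auto intro!: sum.cong simp: ac_simps)
    qed
    finally show "A $$ (i,j) = gram n {..<n} w $$ (i,j)" .
  qed (use A U udu_carrier[OF U, of d] in \<open>auto simp del: udu_carrier\<close>)
  thus ?thesis by auto
qed

definition monom :: "('k \<Rightarrow> nat \<Rightarrow> complex) \<Rightarrow> 'k list \<Rightarrow> nat \<Rightarrow> complex" where
  "monom w t i = prod_list (map (\<lambda>k. w k i) t)"

definition lists_len :: "'k set \<Rightarrow> nat \<Rightarrow> 'k list set" where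
  "lists_len K m = {t. set t \<subseteq> K \<and> length t = m}"

lemma finite_lists_len: "finite K \<Longrightarrow> finite (lists_len K m)"
  unfolding lists_len_def by (rule finite_lists_length_eq)

lemma lists_len_Suc: "lists_len K (Suc m) = (\<lambda>(k,t). k # t) ` (K \<times> lists_len K m)"
  unfolding lists_len_def by (auto simp: length_Suc_conv image_iff)

lemma power_sum_lists:
  fixes f :: "'k \<Rightarrow> 'a :: comm_semiring_1"
  assumes K: "finite K"
  shows "(\<Sum>k\<in>K. f k) ^ m = (\<Sum>t\<in>lists_len K m. prod_list (map f t))"
proof (induction m)
  case 0
  have "lists_len K 0 = {[]}" unfolding lists_len_def by auto
  then show ?case by simp
next
  case (Suc m)
  have inj: "inj_on (\<lambda>(k,t). k # t) (K \<times> lists_len K m)" by (auto simp: inj_on_def)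
  have "(\<Sum>k\<in>K. f k) ^ Suc m = (\<Sum>k\<in>K. f k) * (\<Sum>t\<in>lists_len K m. prod_list (map f t))"
    using Suc by simp
  also have "\<dots> = (\<Sum>(k,t)\<in>K \<times> lists_len K m. f k * prod_list (map f t))"
    by (simp add: sum_product sum.cartesian_product)
  also have "\<dots> = (\<Sum>t\<in>lists_len K (Suc m). prod_list (map f t))"
    unfolding lists_len_Suc by (subst sum.reindex[OF inj]) (auto intro!: sum.cong)
  finally show ?case .
qed

lemma cnj_prod_list: "cnj (prod_list (map f t)) = prod_list (map (\<lambda>x. cnj (f x)) t)"
  by (induction t) auto

lemma prod_list_mult: "prod_list (map (\<lambda>x. f x * g x) t) = prod_list (map f t) * prod_list (map (g::'a\<Rightarrow>'b::comm_monoid_mult) t)"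
  by (induction t) (simp_all add: mult_ac)

lemma entrywise_pow_gram: assumes K: "finite K"
  shows "entrywise (\<lambda>z. z ^ m) (gram n K w) = gram n (lists_len K m) (monom w)"
proof (rule eq_matI)
  fix i j assume "i < dim_row (gram n (lists_len K m) (monom w))" "j < dim_col (gram n (lists_len K m) (monom w))"
  hence i: "i < n" and j: "j < n" by auto
  have "entrywise (\<lambda>z. z ^ m) (gram n K w) $$ (i,j) = (\<Sum>k\<in>K. w k i * cnj (w k j)) ^ m"
    unfolding entrywise_def using i j by simp
  also have "\<dots> = (\<Sum>t\<in>lists_len K m. prod_list (map (\<lambda>k. w k i * cnj (w k j)) t))"
    by (rule power_sum_lists[OF K])
  also have "\<dots> = gram n (lists_len K m) (monom w) $$ (i,j)"
    using i j by (auto simp: monom_def prod_list_mult cnj_prod_list intro!: sum.cong)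
  finally show "entrywise (\<lambda>z. z ^ m) (gram n K w) $$ (i,j) = gram n (lists_len K m) (monom w) $$ (i,j)" .
qed (auto simp: entrywise_def)

definition hset :: "nat \<Rightarrow> 'k set \<Rightarrow> (nat \<times> 'k list) set" where
  "hset N K = (SIGMA j:{..<N}. lists_len K j)"

definition hw :: "(nat \<Rightarrow> real) \<Rightarrow> ('k \<Rightarrow> nat \<Rightarrow> complex) \<Rightarrow> nat \<times> 'k list \<Rightarrow> nat \<Rightarrow> complex" where
  "hw c w jt i = complex_of_real (sqrt (c (fst jt))) * monom w (snd jt) i"

lemma finite_hset: "finite K \<Longrightarrow> finite (hset N K)"
  unfolding hset_def by (auto intro: finite_lists_len)

lemma entrywise_hc_gram: assumes K: "finite K" and c: "\<forall>j<N. c j \<ge> 0"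
  shows "entrywise (hc N c) (gram n K w) = gram n (hset N K) (hw c w)"
proof (rule eq_matI)
  fix i j assume "i < dim_row (gram n (hset N K) (hw c w))" "j < dim_col (gram n (hset N K) (hw c w))"
  hence i: "i < n" and j: "j < n" by auto
  have "entrywise (hc N c) (gram n K w) $$ (i,j) = (\<Sum>p<N. complex_of_real (c p) * (\<Sum>k\<in>K. w k i * cnj (w k j)) ^ p)"
    unfolding entrywise_def hc_def using i j by simp
  also have "\<dots> = (\<Sum>p<N. \<Sum>t\<in>lists_len K p. complex_of_real (c p) * (monom w t i * cnj (monom w t j)))"
    by (simp add: power_sum_lists[OF K] sum_distrib_left monom_def prod_list_mult cnj_prod_list)
  also have "\<dots> = (\<Sum>p<N. \<Sum>t\<in>lists_len K p. hw c w (p,t) i * cnj (hw c w (p,t) j))"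
  proof (intro sum.cong refl)
    fix p t assume p: "p \<in> {..<N}"
    have "complex_of_real (c p) = complex_of_real (sqrt (c p)) * complex_of_real (sqrt (c p))"
      using c p by (simp flip: of_real_mult)
    thus "complex_of_real (c p) * (monom w t i * cnj (monom w t j)) = hw c w (p, t) i * cnj (hw c w (p, t) j)"
      unfolding hw_def by (simp add: ac_simps)
  qed
  also have "\<dots> = (\<Sum>jt\<in>hset N K. hw c w jt i * cnj (hw c w jt j))"
  proof -
    have fin: "\<forall>x\<in>{..<N}. finite (lists_len K x)" using K finite_lists_len by auto
    show ?thesis
      using sum.Sigma[OF finite_lessThan fin, of "\<lambda>p t. hw c w (p,t) i * cnj (hw c w (p,t) j)"]
      by (simp add: hset_def split_def)
  qed
  also have "\<dots> = gram n (hset N K) (hw c w) $$ (i,j)" using i j by simp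
  finally show "entrywise (hc N c) (gram n K w) $$ (i,j) = gram n (hset N K) (hw c w) $$ (i,j)" .
qed (auto simp: entrywise_def)

inductive inspan :: "'k set \<Rightarrow> ('k \<Rightarrow> nat \<Rightarrow> complex) \<Rightarrow> nat \<Rightarrow> (nat \<Rightarrow> complex) \<Rightarrow> bool"
  for K w where
  inspan_monom: "set t \<subseteq> K \<Longrightarrow> length t \<le> j \<Longrightarrow> inspan K w j (monom w t)"
| inspan_add: "inspan K w j x \<Longrightarrow> inspan K w j y \<Longrightarrow> inspan K w j (\<lambda>i. x i + y i)"
| inspan_smult: "inspan K w j x \<Longrightarrow> inspan K w j (\<lambda>i. a * x i)"

lemma inspan_le: "inspan K w j x \<Longrightarrow> j \<le> j' \<Longrightarrow> inspan K w j' x"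
  by (induction rule: inspan.induct) (auto intro: inspan.intros)

lemma inspan_zero: "inspan K w j (\<lambda>i. 0)"
proof -
  have "inspan K w j (monom w [])" by (rule inspan_monom) auto
  from inspan_smult[OF this, of 0] show ?thesis by simp
qed

lemma inspan_sum: "finite S \<Longrightarrow> (\<And>s. s \<in> S \<Longrightarrow> inspan K w j (x s)) \<Longrightarrow> inspan K w j (\<lambda>i. \<Sum>s\<in>S. x s i)"
proof (induction S rule: finite_induct)
  case empty
  then show ?case using inspan_zero by simp
next
  case (insert s S)
  have "inspan K w j (\<lambda>i. x s i + (\<Sum>s\<in>S. x s i))"
    by (rule inspan_add) (use insert in auto)
  then show ?case using insert by simp
qed

lemma inspan_factor: "inspan K w j x \<Longrightarrow> k \<in> K \<Longrightarrow> inspan K w (Suc j) (\<lambda>i. (a * w k i + b) * x i)"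
proof (induction rule: inspan.induct)
  case (inspan_monom t j)
  have 1: "inspan K w (Suc j) (\<lambda>i. a * monom w (k # t) i)"
    by (rule inspan_smult, rule inspan.inspan_monom) (use inspan_monom in auto)
  have 2: "inspan K w (Suc j) (\<lambda>i. b * monom w t i)"
    by (rule inspan_smult, rule inspan.inspan_monom) (use inspan_monom in auto)
  have "(\<lambda>i. (a * w k i + b) * monom w t i) = (\<lambda>i. a * monom w (k # t) i + b * monom w t i)"
    by (auto simp: monom_def algebra_simps)
  then show ?case using inspan_add[OF 1 2] by simp
next
  case (inspan_add j x y)
  have "(\<lambda>i. (a * w k i + b) * (x i + y i)) = (\<lambda>i. (a * w k i + b) * x i + (a * w k i + b) * y i)"
    by (auto simp: algebra_simps)
  then show ?case using inspan.inspan_add[OF inspan_add(3,4)[OF inspan_add(5)]] by simp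
next
  case (inspan_smult j x c)
  have "(\<lambda>i. (a * w k i + b) * (c * x i)) = (\<lambda>i. c * ((a * w k i + b) * x i))"
    by (auto simp: algebra_simps)
  then show ?case using inspan.inspan_smult[OF inspan_smult(2)[OF inspan_smult(3)]] by simp
qed

lemma inspan_prod: "finite S \<Longrightarrow> (\<And>s. s \<in> S \<Longrightarrow> kk s \<in> K) \<Longrightarrow>
  inspan K w (card S) (\<lambda>i. \<Prod>s\<in>S. (a s * w (kk s) i + b s))"
proof (induction S rule: finite_induct)
  case empty
  have "inspan K w 0 (monom w [])" by (rule inspan_monom) auto
  moreover have "monom w [] = (\<lambda>i. 1)" by (rule ext) (simp add: monom_def)
  ultimately show ?case by simp
next
  case (insert s S)
  have "inspan K w (Suc (card S)) (\<lambda>i. (a s * w (kk s) i + b s) * (\<Prod>s\<in>S. (a s * w (kk s) i + b s)))"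
    by (rule inspan_factor) (use insert in auto)
  then show ?case using insert by simp
qed

lemma inspan_L:
  assumes "inspan K w j x"
    and hyp: "\<And>t. set t \<subseteq> K \<Longrightarrow> length t \<le> j \<Longrightarrow> (\<Sum>i<n. cnj (monom w t i) * v i) = 0"
  shows "(\<Sum>i<n. cnj (x i) * v i) = 0"
  using assms
proof (induction rule: inspan.induct)
  case (inspan_monom t j)
  then show ?case by auto
next
  case (inspan_add j x y)
  then show ?case by (simp add: distrib_right sum.distrib)
next
  case (inspan_smult j x a)
  then show ?case by (simp add: sum_distrib_left[symmetric] mult.assoc)
qed

lemma monom_eqp: "set t \<subseteq> K \<Longrightarrow> (\<forall>k\<in>K. w k a = w k b) \<Longrightarrow> monom w t a = monom w t b"
  by (induction t) (auto simp: monom_def)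

lemma kernel_lemma:
  assumes hyp: "\<And>t. set t \<subseteq> K \<Longrightarrow> length t < n \<Longrightarrow> (\<Sum>i<n. cnj (monom w t i) * v i) = 0"
    and t: "set t \<subseteq> K"
  shows "(\<Sum>i<n. cnj (monom w t i) * v i) = 0"
proof (cases "n = 0")
  case True
  then show ?thesis by simp
next
  case False
  define eqp where "eqp a b \<longleftrightarrow> (\<forall>k\<in>K. w k a = w k b)" for a b
  define D where "D i0 = {i'. i' < n \<and> \<not> eqp i' i0}" for i0
  define kk where "kk i0 i' = (SOME k. k \<in> K \<and> w k i' \<noteq> w k i0)" for i0 i'
  define a where "a i0 s = 1 / (w (kk i0 s) i0 - w (kk i0 s) s)" for i0 s
  define b where "b i0 s = - w (kk i0 s) s * a i0 s" for i0 s
  define lag where "lag i0 i = (\<Prod>s\<in>D i0. (a i0 s * w (kk i0 s) i + b i0 s))" for i0 i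
  have kkD: "kk i0 s \<in> K \<and> w (kk i0 s) s \<noteq> w (kk i0 s) i0" if "s \<in> D i0" for i0 s
  proof -
    have "\<exists>k. k \<in> K \<and> w k s \<noteq> w k i0" using that unfolding D_def eqp_def by auto
    from someI_ex[OF this] show ?thesis unfolding kk_def .
  qed
  have finD: "finite (D i0)" for i0 unfolding D_def by auto
  have lag_span: "inspan K w (n - 1) (lag i0)" if i0: "i0 < n" for i0
  proof -
    have "inspan K w (card (D i0)) (lag i0)"
      unfolding lag_def by (rule inspan_prod[OF finD]) (use kkD in auto)
    moreover have "card (D i0) \<le> n - 1"
    proof -
      have "D i0 \<subseteq> {..<n} - {i0}" unfolding D_def eqp_def by auto
      hence "card (D i0) \<le> card ({..<n} - {i0})" by (intro card_mono) auto
      thus ?thesis using i0 by simp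
    qed
    ultimately show ?thesis by (rule inspan_le)
  qed
  have lag_val: "lag i0 i = (if eqp i i0 then 1 else 0)" if i: "i < n" for i0 i
  proof (cases "eqp i i0")
    case True
    have "lag i0 i = (\<Prod>s\<in>D i0. 1)" unfolding lag_def
    proof (rule prod.cong[OF refl])
      fix s assume s: "s \<in> D i0"
      have "w (kk i0 s) i = w (kk i0 s) i0" using True kkD[OF s] unfolding eqp_def by auto
      moreover have "w (kk i0 s) i0 - w (kk i0 s) s \<noteq> 0" using kkD[OF s] by auto
      moreover have "1 / (x - y) * x + - y * (1 / (x - y)) = 1" if "x - y \<noteq> 0" for x y :: complex
      proof -
        obtain z where z: "z = 1 / (x - y)" by simp
        have "z * x + - y * z = (x - y) * z" by (simp add: algebra_simps)
        also have "\<dots> = 1" using that z by simp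
        finally show ?thesis using z by simp
      qed
      ultimately show "a i0 s * w (kk i0 s) i + b i0 s = 1"
        unfolding b_def a_def by simp
    qed
    then show ?thesis using True by simp
  next
    case False
    hence iD: "i \<in> D i0" using i unfolding D_def by auto
    have "a i0 i * w (kk i0 i) i + b i0 i = 0" unfolding b_def by simp
    hence "lag i0 i = 0" unfolding lag_def using finD iD by (auto intro: prod_zero)
    then show ?thesis using False by simp
  qed
  define C where "C i0 = {i'. i' < n \<and> eqp i' i0}" for i0
  define cf where "cf i0 = monom w t i0 / of_nat (card (C i0))" for i0
  define F where "F i = (\<Sum>i0<n. cf i0 * lag i0 i)" for i
  have Fspan: "inspan K w (n - 1) F"
    unfolding F_def using inspan_sum[of "{..<n}" K w "n-1" "\<lambda>i0 i. cf i0 * lag i0 i"]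
      inspan_smult[OF lag_span] by auto
  have Fval: "F i = monom w t i" if i: "i < n" for i
  proof -
    have "F i = (\<Sum>i0\<in>C i. monom w t i / of_nat (card (C i)))"
    proof -
      have "F i = (\<Sum>i0<n. if eqp i0 i then monom w t i / of_nat (card (C i)) else 0)"
        unfolding F_def
      proof (rule sum.cong[OF refl])
        fix i0 assume "i0 \<in> {..<n}"
        show "cf i0 * lag i0 i =
          (if eqp i0 i then monom w t i / of_nat (card (C i)) else 0)"
        proof (cases "eqp i0 i")
          case True
          hence "C i0 = C i" unfolding C_def eqp_def by auto
          moreover have "monom w t i0 = monom w t i" using monom_eqp[OF t] True unfolding eqp_def by auto
          moreover have "eqp i i0" using True unfolding eqp_def by auto
          ultimately show ?thesis using lag_val[OF i, of i0] True by (simp add: cf_def)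
        next
          case False
          hence "\<not> eqp i i0" unfolding eqp_def by metis
          then show ?thesis using lag_val[OF i, of i0] False by simp
        qed
      qed
      also have "\<dots> = (\<Sum>i0\<in>C i. monom w t i / of_nat (card (C i)))"
        unfolding C_def by (rule sum.mono_neutral_cong_right) auto
      finally show ?thesis .
    qed
    also have "\<dots> = monom w t i"
    proof -
      have "i \<in> C i" using i unfolding C_def eqp_def by auto
      moreover have "finite (C i)" unfolding C_def by auto
      ultimately have "card (C i) \<noteq> 0" by auto
      thus ?thesis by simp
    qed
    finally show ?thesis .
  qed
  have "(\<Sum>i<n. cnj (monom w t i) * v i) = (\<Sum>i<n. cnj (F i) * v i)"
    using Fval by auto
  also have "\<dots> = 0"
    by (rule inspan_L[OF Fspan]) (use hyp False in auto)
  finally show ?thesis .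
qed

lemma mp_unique:
  assumes A: "A \<in> carrier_mat n n" and X: "X \<in> carrier_mat n n" and Y: "Y \<in> carrier_mat n n"
    and x1: "A * X * A = A" and x2: "X * A * X = X" and x3: "adj (A * X) = A * X" and x4: "adj (X * A) = X * A"
    and y1: "A * Y * A = A" and y2: "Y * A * Y = Y" and y3: "adj (A * Y) = A * Y" and y4: "adj (Y * A) = Y * A"
  shows "X = Y"
proof -
  note cs = assoc_mult_mat[of _ n n _ n _ n] mult_carrier_mat[of _ n n _ n] adj_mult[of _ n n _ n]
  have aA: "adj A = adj A * adj Y * adj A"
    using arg_cong[OF y1, of adj] A Y by (simp add: cs)
  have "X = X * (A * X)" using x2 A X by (simp add: cs)
  also have "\<dots> = X * (adj X * adj A)" using x3 A X by (simp add: cs)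
  also have "\<dots> = X * (adj X * (adj A * adj Y * adj A))" using aA by simp
  also have "\<dots> = X * adj (A * X) * adj (A * Y)" using A X Y by (simp add: cs)
  also have "\<dots> = X * A * X * A * Y" using x3 y3 A X Y by (simp add: cs)
  also have "\<dots> = X * A * Y" using x2 by simp
  finally have 1: "X = X * A * Y" .
  have "Y = (Y * A) * Y" using y2 A Y by (simp add: cs)
  also have "\<dots> = adj A * adj Y * Y" using y4 A Y by (metis adj_mult)
  also have "\<dots> = adj A * adj X * adj A * adj Y * Y"
  proof -
    have "adj A = adj A * adj X * adj A" using arg_cong[OF x1, of adj] A X by (simp add: cs)
    thus ?thesis by simp
  qed
  also have "\<dots> = adj (X * A) * adj (Y * A) * Y" using A X Y by (simp add: cs)
  also have "\<dots> = X * A * (Y * A * Y)" using x4 y4 A X Y by (simp add: cs)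
  also have "\<dots> = X * A * Y" using y2 by simp
  finally show ?thesis using 1 by simp
qed

lemma mp_inverse_eq:
  assumes A: "A \<in> carrier_mat n n" and X: "X \<in> carrier_mat n n"
    and x1: "A * X * A = A" and x2: "X * A * X = X" and x3: "adj (A * X) = A * X" and x4: "adj (X * A) = X * A"
  shows "mp_inverse A = X"
  unfolding mp_inverse_def
proof (rule the_equality)
  show "X \<in> carrier_mat (dim_col A) (dim_row A) \<and> A * X * A = A \<and> X * A * X = X \<and> adj (A * X) = A * X \<and> adj (X * A) = X * A"
    using assms by auto
  fix Y assume "Y \<in> carrier_mat (dim_col A) (dim_row A) \<and> A * Y * A = A \<and> Y * A * Y = Y \<and> adj (A * Y) = A * Y \<and> adj (Y * A) = Y * A"
  thus "Y = X" using mp_unique[OF A X, of Y] assms by auto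
qed

lemma psd_carrier: "psd n X \<Longrightarrow> X \<in> carrier_mat n n" by (simp add: psd_def)
lemma psd_herm: "psd n X \<Longrightarrow> adj X = X" by (simp add: psd_def)

lemma csq_zero: fixes z :: "complex vec" assumes z: "z \<in> carrier_vec n" and h: "conjugate z \<bullet> z = 0" shows "z = 0\<^sub>v n"
proof -
  have "z \<bullet>c z = 0" using h conjugate_vec_sprod_comm[OF z z] by simp
  thus ?thesis using conjugate_square_eq_0_vec[OF z] by simp
qed

lemma csq_nonneg: fixes z :: "complex vec" assumes z: "z \<in> carrier_vec n" shows "conjugate z \<bullet> z = complex_of_real (\<Sum>i<n. (cmod (z $ i))^2)"
proof -
  have "conjugate z \<bullet> z = (\<Sum>i<n. cnj (z $ i) * z $ i)"
    using z by (auto simp: scalar_prod_def atLeast0LessThan intro!: sum.cong)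
  also have "\<dots> = complex_of_real (\<Sum>i<n. (cmod (z $ i))^2)"
    by (simp only: of_real_sum complex_norm_square) (simp add: ac_simps)
  finally show ?thesis .
qed

lemma psd_sqrt_vec:
  assumes X: "psd n X" and y: "y \<in> carrier_vec n" and e: "e \<ge> 0"
    and h: "X *\<^sub>v (X *\<^sub>v y) = complex_of_real (e * e) \<cdot>\<^sub>v y"
  shows "X *\<^sub>v y = complex_of_real e \<cdot>\<^sub>v y"
proof -
  have Xc: "X \<in> carrier_mat n n" using psd_carrier[OF X] .
  have Xy: "X *\<^sub>v y \<in> carrier_vec n" using Xc y by simp
  show ?thesis
  proof (cases "e = 0")
    case True
    have "conjugate (X *\<^sub>v y) \<bullet> (X *\<^sub>v y) = conjugate y \<bullet> (adj X *\<^sub>v (X *\<^sub>v y))"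
      using adj_sprod[OF adj_carrier[OF Xc] y Xy] psd_herm[OF X] by simp
    also have "\<dots> = 0" using h True psd_herm[OF X] y by simp
    finally have "X *\<^sub>v y = 0\<^sub>v n" using csq_zero[OF Xy] by simp
    thus ?thesis using True y by auto
  next
    case False
    hence ep: "e > 0" using e by simp
    define z where "z = X *\<^sub>v y - complex_of_real e \<cdot>\<^sub>v y"
    have z: "z \<in> carrier_vec n" unfolding z_def using Xy y by simp
    have Xz: "X *\<^sub>v z = - complex_of_real e \<cdot>\<^sub>v z"
    proof -
      have "X *\<^sub>v z = X *\<^sub>v (X *\<^sub>v y) - complex_of_real e \<cdot>\<^sub>v (X *\<^sub>v y)"
        unfolding z_def using Xc y Xy by (simp add: mult_minus_distrib_mat_vec mult_mat_vec)
      also have "\<dots> = - complex_of_real e \<cdot>\<^sub>v z"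
        unfolding h z_def using y Xy Xc by (intro eq_vecI) (auto simp: algebra_simps)
      finally show ?thesis .
    qed
    have "0 \<le> Re (conjugate z \<bullet> (X *\<^sub>v z))" using X z unfolding psd_def by auto
    also have "conjugate z \<bullet> (X *\<^sub>v z) = - complex_of_real e * (conjugate z \<bullet> z)"
      unfolding Xz using z by simp
    also have "\<dots> = complex_of_real (- e * (\<Sum>i<n. (cmod (z $ i))^2))"
      unfolding csq_nonneg[OF z] by simp
    finally have "e * (\<Sum>i<n. (cmod (z $ i))^2) \<le> 0" by simp
    hence "(\<Sum>i<n. (cmod (z $ i))^2) \<le> 0" using ep by (simp add: mult_le_0_iff)
    hence "(\<Sum>i<n. (cmod (z $ i))^2) = 0" by (simp add: antisym sum_nonneg)
    hence "conjugate z \<bullet> z = 0" unfolding csq_nonneg[OF z] by simp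
    hence "z = 0\<^sub>v n" using csq_zero[OF z] by simp
    show ?thesis
    proof (rule eq_vecI)
      fix i assume "i < dim_vec (complex_of_real e \<cdot>\<^sub>v y)"
      hence i: "i < n" using y by simp
      have "z $ i = 0" using \<open>z = 0\<^sub>v n\<close> i by simp
      thus "(X *\<^sub>v y) $ i = (complex_of_real e \<cdot>\<^sub>v y) $ i" unfolding z_def using i Xy y by simp
    qed (use Xy y Xc in simp)
  qed
qed

lemma mult_dmat_col:
  assumes V: "V \<in> carrier_mat n n" and k: "k < n"
  shows "col (V * dmat n e) k = complex_of_real (e k) \<cdot>\<^sub>v col V k"
proof (rule eq_vecI)
  fix i assume "i < dim_vec (complex_of_real (e k) \<cdot>\<^sub>v col V k)"
  hence i: "i < n" using V by simp
  have "col (V * dmat n e) k $ i = (V * dmat n e) $$ (i,k)" using V i k by simp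
  also have "\<dots> = (\<Sum>p<n. V $$ (i,p) * dmat n e $$ (p,k))"
    by (rule mult_entry[OF V dmat_carrier i k])
  also have "\<dots> = (\<Sum>p\<in>{k}. V $$ (i,p) * dmat n e $$ (p,k))"
    by (rule sum.mono_neutral_right) (use k in auto)
  finally show "col (V * dmat n e) k $ i = (complex_of_real (e k) \<cdot>\<^sub>v col V k) $ i"
    using V i k by simp
qed (use V in simp)

lemma psd_sqrt_unique:
  assumes X: "psd n X" and Y: "psd n Y" and XY: "X * X = Y * Y"
  shows "X = Y"
proof -
  obtain V e where V: "unitary n V" and Yd: "Y = udu n V e" and e: "\<forall>i<n. e i \<ge> 0"
    using psd_decomp[OF Y] by auto
  have Vc: "V \<in> carrier_mat n n" using V unitary_carrier by auto
  have Xc: "X \<in> carrier_mat n n" and Yc: "Y \<in> carrier_mat n n" using X Y psd_carrier by auto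
  have YV: "Y * V = V * dmat n e"
  proof -
    have "udu n V e * V = V * (dmat n e * (adj V * V))"
      unfolding udu_def using Vc by (simp add: assoc_mult_mat[of _ n n _ n _ n] mult_carrier_mat[of _ n n _ n])
    also have "\<dots> = V * dmat n e" using V Vc unfolding unitary_def by simp
    finally show ?thesis unfolding Yd .
  qed
  have cols: "col (X * V) k = col (Y * V) k" if k: "k < n" for k
  proof -
    define y where "y = col V k"
    have y: "y \<in> carrier_vec n" unfolding y_def col_def using Vc by (simp add: carrier_matD)
    have cY: "col (Y * V) k = Y *\<^sub>v y" unfolding y_def by (rule col_mult2[OF Yc Vc k])
    have cX: "col (X * V) k = X *\<^sub>v y" unfolding y_def by (rule col_mult2[OF Xc Vc k])
    have Yy: "Y *\<^sub>v y = complex_of_real (e k) \<cdot>\<^sub>v y"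
    proof -
      have "Y *\<^sub>v y = col (V * dmat n e) k" using cY YV by simp
      also have "\<dots> = complex_of_real (e k) \<cdot>\<^sub>v col V k" by (rule mult_dmat_col[OF Vc k])
      finally show ?thesis unfolding y_def .
    qed
    have "X *\<^sub>v (X *\<^sub>v y) = (X * X) *\<^sub>v y" by (rule assoc_mult_mat_vec[symmetric, OF Xc Xc y])
    also have "\<dots> = (Y * Y) *\<^sub>v y" by (simp only: XY)
    also have "\<dots> = Y *\<^sub>v (Y *\<^sub>v y)" by (rule assoc_mult_mat_vec[OF Yc Yc y])
    also have "\<dots> = complex_of_real (e k) \<cdot>\<^sub>v (complex_of_real (e k) \<cdot>\<^sub>v y)"
      by (simp only: Yy mult_mat_vec[OF Yc y])
    also have "\<dots> = complex_of_real (e k * e k) \<cdot>\<^sub>v y"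
      by (simp only: smult_smult_assoc of_real_mult)
    finally have "X *\<^sub>v y = complex_of_real (e k) \<cdot>\<^sub>v y" by (rule psd_sqrt_vec[OF X y e[rule_format, OF k]])
    thus ?thesis unfolding cX cY Yy .
  qed
  have "X * V = Y * V" by (rule mat_col_eqI) (use cols Xc Yc Vc in simp_all)
  hence "X * V * adj V = Y * V * adj V" by simp
  thus ?thesis using Xc Yc Vc V unfolding unitary_def by (simp add: assoc_mult_mat[of _ n n _ n _ n])
qed

lemma psd_sqrt_eq: assumes X: "psd n X" and A: "A \<in> carrier_mat n n" and XX: "X * X = A"
  shows "psd_sqrt A = X"
  unfolding psd_sqrt_def
proof (rule the_equality)
  show "psd (dim_row A) X \<and> X * X = A" using assms by auto
  fix Y assume "psd (dim_row A) Y \<and> Y * Y = A"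
  thus "Y = X" using psd_sqrt_unique[OF _ X, of Y] A XX by auto
qed

lemma mp_inverse_udu: assumes U: "unitary n U"
  shows "mp_inverse (udu n U d) = udu n U (\<lambda>i. inverse (d i))"
proof (rule mp_inverse_eq[OF udu_carrier[OF U] udu_carrier[OF U]])
  have e1: "(\<lambda>i. d i * inverse (d i) * d i) = d" by (rule ext) (case_tac "d i = 0", auto)
  have e2: "(\<lambda>i. inverse (d i) * d i * inverse (d i)) = (\<lambda>i. inverse (d i))" by (rule ext) (case_tac "d i = 0", auto)
  show "udu n U d * udu n U (\<lambda>i. inverse (d i)) * udu n U d = udu n U d"
    using e1 by (simp add: udu_mult[OF U])
  show "udu n U (\<lambda>i. inverse (d i)) * udu n U d * udu n U (\<lambda>i. inverse (d i)) = udu n U (\<lambda>i. inverse (d i))"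
    using e2 by (simp add: udu_mult[OF U])
  show "adj (udu n U d * udu n U (\<lambda>i. inverse (d i))) = udu n U d * udu n U (\<lambda>i. inverse (d i))"
    by (simp add: udu_mult[OF U] adj_udu[OF U])
  show "adj (udu n U (\<lambda>i. inverse (d i)) * udu n U d) = udu n U (\<lambda>i. inverse (d i)) * udu n U d"
    by (simp add: udu_mult[OF U] adj_udu[OF U])
qed

lemma mp_half_udu: assumes U: "unitary n U" and d: "\<forall>i<n. d i \<ge> 0"
  shows "mp_half (udu n U d) = udu n U (\<lambda>i. sqrt (inverse (d i)))"
proof -
  have "udu n U (\<lambda>i. sqrt (inverse (d i))) * udu n U (\<lambda>i. sqrt (inverse (d i))) = udu n U (\<lambda>i. inverse (d i))"
  proof -
    have "udu n U (\<lambda>i. sqrt (inverse (d i))) * udu n U (\<lambda>i. sqrt (inverse (d i)))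
        = udu n U (\<lambda>i. sqrt (inverse (d i)) * sqrt (inverse (d i)))" by (simp add: udu_mult[OF U])
    also have "\<dots> = udu n U (\<lambda>i. if i < n then inverse (d i) else sqrt (inverse (d i)) * sqrt (inverse (d i)))"
      unfolding udu_def dmat_def by (rule arg_cong2[where f = "(*)"], rule arg_cong[where f = "\<lambda>x. U * x"])
        (use d in \<open>auto intro!: cong_mat\<close>)
    also have "\<dots> = udu n U (\<lambda>i. inverse (d i))"
      unfolding udu_def dmat_def by (rule arg_cong2[where f = "(*)"], rule arg_cong[where f = "\<lambda>x. U * x"])
        (auto intro!: cong_mat)
    finally show ?thesis .
  qed
  moreover have "psd n (udu n U (\<lambda>i. sqrt (inverse (d i))))" by (rule psd_udu[OF U]) (use d in auto)
  ultimately show ?thesis unfolding mp_half_def mp_inverse_udu[OF U]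
    by (intro psd_sqrt_eq) (auto simp: U)
qed

lemma unitary_adj_mult_col: assumes V: "unitary n V" and i: "i < n"
  shows "adj V *\<^sub>v col V i = unit_vec n i"
proof -
  have Vc: "V \<in> carrier_mat n n" using V unitary_carrier by auto
  have "adj V *\<^sub>v col V i = col (adj V * V) i" using col_mult2[OF adj_carrier[OF Vc] Vc i] by simp
  also have "\<dots> = unit_vec n i" using V i unfolding unitary_def by simp
  finally show ?thesis .
qed

lemma col_carrier': "V \<in> carrier_mat n m \<Longrightarrow> col V i \<in> carrier_vec n"
  unfolding col_def by (simp add: carrier_matD)

lemma udu_col: assumes V: "unitary n V" and i: "i < n"
  shows "udu n V l *\<^sub>v col V i = complex_of_real (l i) \<cdot>\<^sub>v col V i"
proof -
  have Vc: "V \<in> carrier_mat n n" using V unitary_carrier by auto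
  have KV: "udu n V l * V = V * dmat n l"
  proof -
    have "udu n V l * V = V * (dmat n l * (adj V * V))"
      unfolding udu_def using Vc by (simp add: assoc_mult_mat[of _ n n _ n _ n] mult_carrier_mat[of _ n n _ n])
    also have "\<dots> = V * dmat n l" using V Vc unfolding unitary_def by simp
    finally show ?thesis .
  qed
  have "udu n V l *\<^sub>v col V i = col (udu n V l * V) i" using col_mult2[OF udu_carrier[OF V] Vc i] by simp
  also have "\<dots> = col (V * dmat n l) i" using KV by simp
  also have "\<dots> = complex_of_real (l i) \<cdot>\<^sub>v col V i" by (rule mult_dmat_col[OF Vc i])
  finally show ?thesis .
qed

lemma spectrum_udu1: assumes V: "unitary n V" and i: "i < n"
  shows "complex_of_real (l i) \<in> spectrum (udu n V l)"
proof -
  have Vc: "V \<in> carrier_mat n n" using V unitary_carrier by auto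
  have "col V i \<noteq> 0\<^sub>v n"
  proof
    assume "col V i = 0\<^sub>v n"
    hence "adj V *\<^sub>v col V i = 0\<^sub>v n" using Vc by (intro eq_vecI) auto
    hence "unit_vec n i = (0\<^sub>v n :: complex vec)" using unitary_adj_mult_col[OF V i] by simp
    hence "unit_vec n i $ i = (0\<^sub>v n :: complex vec) $ i" by simp
    thus False using i by simp
  qed
  thus ?thesis unfolding spectrum_def eigenvalue_def eigenvector_def
    using udu_col[OF V i] col_carrier'[OF Vc] udu_carrier[OF V, of l] by auto
qed

lemma spectrum_udu2: assumes V: "unitary n V" and k: "k \<in> spectrum (udu n V l)"
  shows "\<exists>i<n. k = complex_of_real (l i)"
proof -
  have Vc: "V \<in> carrier_mat n n" using V unitary_carrier by auto
  obtain v where v: "v \<in> carrier_vec n" and v0: "v \<noteq> 0\<^sub>v n" and Kv: "udu n V l *\<^sub>v v = k \<cdot>\<^sub>v v"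
    using k udu_carrier[OF V, of l] unfolding spectrum_def eigenvalue_def eigenvector_def by auto
  define y where "y = adj V *\<^sub>v v"
  have y: "y \<in> carrier_vec n" unfolding y_def using mult_mat_vec_carrier[OF adj_carrier[OF Vc] v] .
  have Vy: "V *\<^sub>v y = v" unfolding y_def using V Vc v unfolding unitary_def
    by (simp add: assoc_mult_mat_vec[symmetric, of _ n n _ n])
  have VDy: "V *\<^sub>v (dmat n l *\<^sub>v y) = udu n V l *\<^sub>v v"
  proof -
    have "udu n V l *\<^sub>v v = (V * dmat n l) *\<^sub>v y" unfolding udu_def y_def
      by (rule assoc_mult_mat_vec[OF mult_carrier_mat[OF Vc dmat_carrier] adj_carrier[OF Vc] v])
    also have "\<dots> = V *\<^sub>v (dmat n l *\<^sub>v y)" by (rule assoc_mult_mat_vec[OF Vc dmat_carrier y])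
    finally show ?thesis by simp
  qed
  have Dy: "dmat n l *\<^sub>v y = k \<cdot>\<^sub>v y"
  proof -
    have "dmat n l *\<^sub>v y = (adj V * V) *\<^sub>v (dmat n l *\<^sub>v y)" using V y mult_mat_vec_carrier[OF dmat_carrier y] unfolding unitary_def by simp
    also have "\<dots> = adj V *\<^sub>v (V *\<^sub>v (dmat n l *\<^sub>v y))"
      by (rule assoc_mult_mat_vec[OF adj_carrier[OF Vc] Vc mult_mat_vec_carrier[OF dmat_carrier y]])
    also have "\<dots> = k \<cdot>\<^sub>v y" unfolding VDy Kv by (simp add: mult_mat_vec[OF adj_carrier[OF Vc] v] y_def)
    finally show ?thesis .
  qed
  have "y \<noteq> 0\<^sub>v n"
  proof
    assume "y = 0\<^sub>v n"
    hence "V *\<^sub>v y = 0\<^sub>v n" using Vc by (intro eq_vecI) auto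
    hence "v = 0\<^sub>v n" using Vy by simp
    thus False using v0 by simp
  qed
  then obtain i where i: "i < n" and yi: "y $ i \<noteq> 0" using y by (auto simp: vec_eq_iff)
  have "(dmat n l *\<^sub>v y) $ i = (\<Sum>p<n. dmat n l $$ (i,p) * y $ p)" by (rule mult_vec_entry) (use y i in auto)
  also have "\<dots> = (\<Sum>p\<in>{i}. dmat n l $$ (i,p) * y $ p)"
    by (rule sum.mono_neutral_right) (use i in auto)
  finally have e1: "(dmat n l *\<^sub>v y) $ i = complex_of_real (l i) * y $ i" using i by simp
  have e2: "(dmat n l *\<^sub>v y) $ i = k * y $ i" using Dy i y by simp
  from e1 e2 yi have "k = complex_of_real (l i)" by simp
  thus ?thesis using i by auto
qed

lemma spectral_radius_udu: assumes V: "unitary n V" and n: "n > 0" and l: "\<forall>i<n. l i \<ge> 0"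
  shows "\<exists>i0<n. spectral_radius (udu n V l) = l i0" "\<And>i. i < n \<Longrightarrow> l i \<le> spectral_radius (udu n V l)"
proof -
  note sr = spectral_radius_mem_max[OF udu_carrier[OF V, of l] n]
  from sr(1) obtain k where k: "k \<in> spectrum (udu n V l)" and kr: "spectral_radius (udu n V l) = norm k" by auto
  from spectrum_udu2[OF V k] obtain i where i: "i < n" and ki: "k = complex_of_real (l i)" by auto
  show "\<exists>i0<n. spectral_radius (udu n V l) = l i0" using kr ki i l by auto
  fix i assume i: "i < n"
  have "norm (complex_of_real (l i)) \<le> spectral_radius (udu n V l)"
    by (rule sr(2), rule image_eqI[OF _ spectrum_udu1[OF V i]], simp)
  thus "l i \<le> spectral_radius (udu n V l)" using l i by simp
qed

lemma norm_pres: assumes V: "unitary n V" and w: "w \<in> carrier_vec n"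
  shows "(\<Sum>i<n. (cmod ((adj V *\<^sub>v w) $ i))^2) = (\<Sum>i<n. (cmod (w $ i))^2)"
proof -
  have Vc: "V \<in> carrier_mat n n" using V unitary_carrier by auto
  have "udu n V (\<lambda>_. 1) = 1\<^sub>m n"
  proof -
    have "dmat n (\<lambda>_. 1) = 1\<^sub>m n" by (rule eq_matI) auto
    thus ?thesis unfolding udu_def using V Vc unfolding unitary_def by simp
  qed
  hence "conjugate w \<bullet> w = (\<Sum>i<n. complex_of_real (1 * (cmod ((adj V *\<^sub>v w) $ i))^2))"
    using qf_udu[OF V w, of "\<lambda>_. 1"] w by simp
  hence "complex_of_real (\<Sum>i<n. (cmod (w $ i))^2) = complex_of_real (\<Sum>i<n. (cmod ((adj V *\<^sub>v w) $ i))^2)"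
    unfolding csq_nonneg[OF w] by simp
  thus ?thesis by (simp only: of_real_eq_iff)
qed

lemma qf_lin: fixes A B :: "complex mat" assumes A: "A \<in> carrier_mat n n" and B: "B \<in> carrier_mat n n" and v: "v \<in> carrier_vec n"
  shows "conjugate v \<bullet> ((a \<cdot>\<^sub>m A - B) *\<^sub>v v) = a * (conjugate v \<bullet> (A *\<^sub>v v)) - conjugate v \<bullet> (B *\<^sub>v v)"
proof -
  have "(a \<cdot>\<^sub>m A - B) *\<^sub>v v = a \<cdot>\<^sub>v (A *\<^sub>v v) - B *\<^sub>v v"
  proof (rule eq_vecI)
    fix i assume "i < dim_vec (a \<cdot>\<^sub>v (A *\<^sub>v v) - B *\<^sub>v v)"
    hence i: "i < n" using B by simp
    have "((a \<cdot>\<^sub>m A - B) *\<^sub>v v) $ i = (\<Sum>l<n. (a \<cdot>\<^sub>m A - B) $$ (i,l) * v $ l)"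
      by (rule mult_vec_entry) (use A B v i in auto)
    also have "\<dots> = (\<Sum>l<n. a * (A $$ (i,l) * v $ l) - B $$ (i,l) * v $ l)"
      by (rule sum.cong) (use A B i in \<open>auto simp: algebra_simps\<close>)
    also have "\<dots> = a * (\<Sum>l<n. A $$ (i,l) * v $ l) - (\<Sum>l<n. B $$ (i,l) * v $ l)"
      by (simp add: sum_subtractf sum_distrib_left)
    also have "\<dots> = (a \<cdot>\<^sub>v (A *\<^sub>v v) - B *\<^sub>v v) $ i"
      using A B v i mult_vec_entry[OF A v i] mult_vec_entry[OF B v i] by simp
    finally show "((a \<cdot>\<^sub>m A - B) *\<^sub>v v) $ i = (a \<cdot>\<^sub>v (A *\<^sub>v v) - B *\<^sub>v v) $ i" .
  qed (use A B in auto)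
  hence "conjugate v \<bullet> ((a \<cdot>\<^sub>m A - B) *\<^sub>v v) = conjugate v \<bullet> (a \<cdot>\<^sub>v (A *\<^sub>v v)) - conjugate v \<bullet> (B *\<^sub>v v)"
    using A B v by (simp add: scalar_prod_minus_distrib[of _ n])
  thus ?thesis using A B v by simp
qed

lemma psd_congr: assumes P: "psd n P" and S: "S \<in> carrier_mat n n" and hS: "adj S = S"
  shows "psd n (S * P * S)" and "\<And>x. x \<in> carrier_vec n \<Longrightarrow> conjugate x \<bullet> ((S * P * S) *\<^sub>v x) = conjugate (S *\<^sub>v x) \<bullet> (P *\<^sub>v (S *\<^sub>v x))"
proof -
  have Pc: "P \<in> carrier_mat n n" using P psd_carrier by auto
  show q: "conjugate x \<bullet> ((S * P * S) *\<^sub>v x) = conjugate (S *\<^sub>v x) \<bullet> (P *\<^sub>v (S *\<^sub>v x))" if x: "x \<in> carrier_vec n" for x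
  proof -
    have "(S * P * S) *\<^sub>v x = S *\<^sub>v (P *\<^sub>v (S *\<^sub>v x))"
      using S Pc x by (simp add: assoc_mult_mat_vec[of _ n n _ n] mult_carrier_mat[of _ n n _ n])
    thus ?thesis using adj_sprod[OF S x, of "P *\<^sub>v (S *\<^sub>v x)"] hS S Pc x by simp
  qed
  have "adj (S * P * S) = S * P * S"
    using S Pc hS psd_herm[OF P] by (simp add: adj_mult[of _ n n _ n] mult_carrier_mat[of _ n n _ n] assoc_mult_mat[of _ n n _ n _ n])
  moreover have "0 \<le> Re (conjugate x \<bullet> ((S * P * S) *\<^sub>v x))" if x: "x \<in> carrier_vec n" for x
    unfolding q[OF x] using P S x unfolding psd_def by auto
  ultimately show "psd n (S * P * S)" unfolding psd_def using S Pc by auto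
qed

lemma qshift:
  fixes P :: "complex mat"
  assumes P: "P \<in> carrier_mat n n" and hP: "adj P = P" and x: "x \<in> carrier_vec n" and z: "z \<in> carrier_vec n"
    and Pz: "P *\<^sub>v z = 0\<^sub>v n"
  shows "conjugate (x + z) \<bullet> (P *\<^sub>v (x + z)) = conjugate x \<bullet> (P *\<^sub>v x)"
proof -
  have Px: "P *\<^sub>v x \<in> carrier_vec n" using P x by simp
  have "P *\<^sub>v (x + z) = P *\<^sub>v x" using mult_add_distrib_mat_vec[OF P x z] Pz Px by simp
  moreover have "conjugate (x + z) = conjugate x + conjugate z" by (rule conjugate_add_vec[OF x z])
  moreover have "(conjugate x + conjugate z) \<bullet> (P *\<^sub>v x) = conjugate x \<bullet> (P *\<^sub>v x) + conjugate z \<bullet> (P *\<^sub>v x)"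
    by (rule add_scalar_prod_distrib[of _ n]) (use x z Px in auto)
  moreover have "conjugate z \<bullet> (P *\<^sub>v x) = 0"
    using adj_sprod[OF P z x] hP Pz x by simp
  ultimately show ?thesis by simp
qed

lemma udu_cong: "(\<And>i. i < n \<Longrightarrow> f i = g i) \<Longrightarrow> udu n U f = udu n U g"
  unfolding udu_def dmat_def by (rule arg_cong2[where f = "(*)"], rule arg_cong[where f = "\<lambda>x. U * x"]) (auto intro!: cong_mat)

lemma sum_unit: assumes i0: "i0 < n"
  shows "(\<Sum>i<n. f i * (cmod (unit_vec n i0 $ i))^2) = f i0"
proof -
  have "(\<Sum>i<n. f i * (cmod (unit_vec n i0 $ i))^2) = (\<Sum>i\<in>{i0}. f i * (cmod (unit_vec n i0 $ i))^2)"
    by (rule sum.mono_neutral_right) (use i0 in auto)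
  thus ?thesis using i0 by simp
qed

lemma main1:
  fixes N M :: nat and c :: "nat \<Rightarrow> real" and A :: "complex mat"
  assumes N1: "N \<ge> 1" and cpos: "\<forall>j<N. c j > 0" and A: "psd N A"
  shows "crit_set N (hc N c) (\<lambda>z. z ^ M) A =
    {C. spectral_radius (mp_half (entrywise (hc N c) A) * entrywise (\<lambda>z. z ^ M) A * mp_half (entrywise (hc N c) A)) \<le> C}"
proof -
  define n where "n = N"
  have n0: "n > 0" using N1 n_def by simp
  obtain w where Aw: "A = gram n {..<n} w" using psd_gram_decomp[OF A] n_def by auto
  define K0 where "K0 = {..<n}"
  have finK0: "finite K0" unfolding K0_def by simp
  define H where "H = entrywise (hc N c) A"
  define P where "P = entrywise (\<lambda>z. z ^ M) A"
  have c0: "\<forall>j<N. c j \<ge> 0" using cpos by (simp add: less_imp_le)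
  have Hg: "H = gram n (hset N K0) (hw c w)" unfolding H_def Aw K0_def by (rule entrywise_hc_gram[OF _ c0]) simp
  have Pg: "P = gram n (lists_len K0 M) (monom w)" unfolding P_def Aw K0_def by (rule entrywise_pow_gram) simp
  have psdH: "psd n H" unfolding Hg by (rule psd_gram)
  have psdP: "psd n P" unfolding Pg by (rule psd_gram)
  have Hc: "H \<in> carrier_mat n n" and Pc: "P \<in> carrier_mat n n" using psdH psdP psd_carrier by auto
  have hH: "adj H = H" and hP: "adj P = P" using psdH psdP psd_herm by auto
  obtain U d where U: "unitary n U" and Hd: "H = udu n U d" and d: "\<forall>i<n. d i \<ge> 0"
    using psd_decomp[OF psdH] by auto
  have Uc: "U \<in> carrier_mat n n" using U unitary_carrier by auto
  define s where "s i = sqrt (inverse (d i))" for i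
  define S where "S = udu n U s"
  have mpS: "mp_half H = S" unfolding Hd S_def s_def by (rule mp_half_udu[OF U d])
  have Sc: "S \<in> carrier_mat n n" unfolding S_def using U by simp
  have hS: "adj S = S" unfolding S_def using adj_udu[OF U] .
  define K where "K = S * P * S"
  have psdK: "psd n K" unfolding K_def by (rule psd_congr(1)[OF psdP Sc hS])
  have qK: "conjugate x \<bullet> (K *\<^sub>v x) = conjugate (S *\<^sub>v x) \<bullet> (P *\<^sub>v (S *\<^sub>v x))" if "x \<in> carrier_vec n" for x
    unfolding K_def by (rule psd_congr(2)[OF psdP Sc hS that])
  obtain V l where V: "unitary n V" and Kl: "K = udu n V l" and l: "\<forall>i<n. l i \<ge> 0"
    using psd_decomp[OF psdK] by auto
  have Vc: "V \<in> carrier_mat n n" using V unitary_carrier by auto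
  define \<rho> where "\<rho> = spectral_radius K"
  obtain i0 where i0: "i0 < n" and \<rho>i0: "\<rho> = l i0" using spectral_radius_udu(1)[OF V n0 l] Kl \<rho>_def by auto
  have l\<rho>: "l i \<le> \<rho>" if "i < n" for i using spectral_radius_udu(2)[OF V n0 l that] Kl \<rho>_def by simp
  have \<rho>0: "\<rho> \<ge> 0" using l i0 \<rho>i0 by simp
  have kerP: "P *\<^sub>v z = 0\<^sub>v n" if z: "z \<in> carrier_vec n" and Hz: "H *\<^sub>v z = 0\<^sub>v n" for z
  proof -
    have "conjugate z \<bullet> (H *\<^sub>v z) = 0" using Hz z by simp
    moreover have "complex_of_real (\<Sum>jt\<in>hset N K0. (cmod (\<Sum>j<n. cnj (hw c w jt j) * z $ j))^2) = conjugate z \<bullet> (H *\<^sub>v z)"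
      unfolding Hg by (rule qf_gram[OF z, symmetric])
    ultimately have "(\<Sum>jt\<in>hset N K0. (cmod (\<Sum>j<n. cnj (hw c w jt j) * z $ j))^2) = 0"
      by (simp only: of_real_eq_0_iff)
    hence zero: "\<And>jt. jt \<in> hset N K0 \<Longrightarrow> (\<Sum>j<n. cnj (hw c w jt j) * z $ j) = 0"
    proof -
      fix jt assume jt: "jt \<in> hset N K0"
      have "(cmod (\<Sum>j<n. cnj (hw c w jt j) * z $ j))^2 = 0"
        using sum_nonneg_eq_0_iff[OF finite_hset[OF finK0], of N "\<lambda>jt. (cmod (\<Sum>j<n. cnj (hw c w jt j) * z $ j))^2"]
          \<open>(\<Sum>jt\<in>hset N K0. (cmod (\<Sum>j<n. cnj (hw c w jt j) * z $ j))^2) = 0\<close> jt by auto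
      thus "(\<Sum>j<n. cnj (hw c w jt j) * z $ j) = 0" by simp
    qed
    have hyp: "(\<Sum>i<n. cnj (monom w t i) * z $ i) = 0" if t: "set t \<subseteq> K0" "length t < n" for t
    proof -
      have mem: "(length t, t) \<in> hset N K0" using t n_def unfolding hset_def lists_len_def by auto
      have cp: "c (length t) > 0" using cpos t n_def by auto
      have "(\<Sum>j<n. cnj (hw c w (length t, t) j) * z $ j) =
          complex_of_real (sqrt (c (length t))) * (\<Sum>i<n. cnj (monom w t i) * z $ i)"
        unfolding hw_def by (simp add: sum_distrib_left ac_simps)
      thus ?thesis using zero[OF mem] cp by simp
    qed
    have allt: "(\<Sum>i<n. cnj (monom w t i) * z $ i) = 0" if t: "set t \<subseteq> K0" for t
      using kernel_lemma[of K0 n w "\<lambda>i. z $ i", OF hyp t] by simp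
    show ?thesis
    proof (rule eq_vecI)
      fix i assume "i < dim_vec (0\<^sub>v n :: complex vec)"
      hence i: "i < n" by simp
      have "(P *\<^sub>v z) $ i = (\<Sum>j<n. (\<Sum>t\<in>lists_len K0 M. monom w t i * cnj (monom w t j)) * z $ j)"
        using mult_vec_entry[OF Pc z i] i Pg by simp
      also have "\<dots> = (\<Sum>t\<in>lists_len K0 M. monom w t i * (\<Sum>j<n. cnj (monom w t j) * z $ j))"
        by (simp add: sum_distrib_left sum_distrib_right ac_simps) (rule sum.swap)
      also have "\<dots> = 0" using allt unfolding lists_len_def by simp
      finally show "(P *\<^sub>v z) $ i = (0\<^sub>v n :: complex vec) $ i" using i by simp
    qed (use Pc in simp)
  qed
  have qflin: "conjugate v \<bullet> ((complex_of_real C \<cdot>\<^sub>m H - P) *\<^sub>v v) =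
      complex_of_real C * (conjugate v \<bullet> (H *\<^sub>v v)) - conjugate v \<bullet> (P *\<^sub>v v)" if v: "v \<in> carrier_vec n" for v C
    by (rule qf_lin[OF Hc Pc v])
  have qHreal: "conjugate v \<bullet> (H *\<^sub>v v) = complex_of_real (Re (conjugate v \<bullet> (H *\<^sub>v v)))" if v: "v \<in> carrier_vec n" for v
    unfolding Hg qf_gram[OF v] by simp
  have qPreal: "conjugate v \<bullet> (P *\<^sub>v v) = complex_of_real (Re (conjugate v \<bullet> (P *\<^sub>v v)))" if v: "v \<in> carrier_vec n" for v
    unfolding Pg qf_gram[OF v] by simp
  have qHnn: "0 \<le> Re (conjugate v \<bullet> (H *\<^sub>v v))" if v: "v \<in> carrier_vec n" for v
    using psdH v unfolding psd_def by auto
  have qPnn: "0 \<le> Re (conjugate v \<bullet> (P *\<^sub>v v))" if v: "v \<in> carrier_vec n" for v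
    using psdP v unfolding psd_def by auto
  have ReCHP: "Re (conjugate v \<bullet> ((complex_of_real C \<cdot>\<^sub>m H - P) *\<^sub>v v)) =
      C * Re (conjugate v \<bullet> (H *\<^sub>v v)) - Re (conjugate v \<bullet> (P *\<^sub>v v))" if v: "v \<in> carrier_vec n" for v C
    unfolding qflin[OF v] by (subst qHreal[OF v], subst qPreal[OF v]) simp
  have hCHP: "adj (complex_of_real C \<cdot>\<^sub>m H - P) = complex_of_real C \<cdot>\<^sub>m H - P" for C
    using Hc Pc hH hP by (simp add: adj_minus[of _ n n] adj_smult)
  have dir1: "loewner_le n P (complex_of_real C \<cdot>\<^sub>m H)" if C\<rho>: "\<rho> \<le> C" for C
  proof -
    have "0 \<le> Re (conjugate v \<bullet> ((complex_of_real C \<cdot>\<^sub>m H - P) *\<^sub>v v))" if v: "v \<in> carrier_vec n" for v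
    proof -
      define \<pi> where "\<pi> i = d i * inverse (d i)" for i
      define r where "r i = sqrt (d i)" for i
      define Pi where "Pi = udu n U \<pi>"
      define R where "R = udu n U r"
      have Pic: "Pi \<in> carrier_mat n n" and Rc: "R \<in> carrier_mat n n" unfolding Pi_def R_def using U by auto
      have sr: "(\<lambda>i. s i * r i) = \<pi>"
      proof
        fix i show "s i * r i = \<pi> i"
          unfolding s_def r_def \<pi>_def by (cases "d i = 0") (auto simp: real_sqrt_mult[symmetric] real_sqrt_inverse)
      qed
      have SR: "S * R = Pi" unfolding S_def R_def Pi_def udu_mult[OF U] sr ..
      have dpi: "(\<lambda>i. d i * \<pi> i) = d" unfolding \<pi>_def by (rule ext) (case_tac "d i = 0", auto)
      have HPi: "H * Pi = H" unfolding Hd Pi_def udu_mult[OF U] dpi ..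
      have rr: "udu n U (\<lambda>i. r i * r i) = udu n U d"
        by (rule udu_cong) (use d in \<open>auto simp: r_def\<close>)
      define w where "w = R *\<^sub>v v"
      have wc: "w \<in> carrier_vec n" unfolding w_def using Rc v by simp
      have Piv: "Pi *\<^sub>v v = S *\<^sub>v w" unfolding w_def SR[symmetric] by (rule assoc_mult_mat_vec[OF Sc Rc v])
      have Pivc: "Pi *\<^sub>v v \<in> carrier_vec n" using Pic v by simp
      define z where "z = v - Pi *\<^sub>v v"
      have zc: "z \<in> carrier_vec n" unfolding z_def using v Pivc by simp
      have Hz: "H *\<^sub>v z = 0\<^sub>v n"
      proof -
        have "H *\<^sub>v z = H *\<^sub>v v - H *\<^sub>v (Pi *\<^sub>v v)" unfolding z_def by (rule mult_minus_distrib_mat_vec[OF Hc v Pivc])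
        also have "H *\<^sub>v (Pi *\<^sub>v v) = H *\<^sub>v v" using assoc_mult_mat_vec[OF Hc Pic v] HPi by simp
        finally show ?thesis using Hc v by simp
      qed
      have Pz: "P *\<^sub>v z = 0\<^sub>v n" by (rule kerP[OF zc Hz])
      have vdec: "v = Pi *\<^sub>v v + z" unfolding z_def using v Pivc Pic by (intro eq_vecI) auto
      have "conjugate v \<bullet> (P *\<^sub>v v) = conjugate (Pi *\<^sub>v v) \<bullet> (P *\<^sub>v (Pi *\<^sub>v v))"
        by (subst (1 2) vdec, rule qshift[OF Pc hP Pivc zc Pz])
      also have "\<dots> = conjugate w \<bullet> (K *\<^sub>v w)" unfolding Piv using qK[OF wc] by simp
      also have "\<dots> = (\<Sum>i<n. complex_of_real (l i * (cmod ((adj V *\<^sub>v w) $ i))^2))"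
        unfolding Kl by (rule qf_udu[OF V wc])
      finally have "Re (conjugate v \<bullet> (P *\<^sub>v v)) = (\<Sum>i<n. l i * (cmod ((adj V *\<^sub>v w) $ i))^2)"
        by (simp add: Re_sum)
      also have "\<dots> \<le> (\<Sum>i<n. \<rho> * (cmod ((adj V *\<^sub>v w) $ i))^2)"
        by (rule sum_mono) (use l\<rho> in \<open>auto intro: mult_right_mono\<close>)
      also have "\<dots> = \<rho> * (\<Sum>i<n. (cmod (w $ i))^2)"
        by (simp only: sum_distrib_left[symmetric] norm_pres[OF V wc])
      also have "(\<Sum>i<n. (cmod (w $ i))^2) = Re (conjugate v \<bullet> (H *\<^sub>v v))"
      proof -
        have "conjugate w \<bullet> w = conjugate v \<bullet> (adj R *\<^sub>v (R *\<^sub>v v))"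
          unfolding w_def using adj_sprod[OF adj_carrier[OF Rc] v, of "R *\<^sub>v v"] Rc v by simp
        also have "adj R *\<^sub>v (R *\<^sub>v v) = H *\<^sub>v v"
        proof -
          have "adj R *\<^sub>v (R *\<^sub>v v) = (R * R) *\<^sub>v v"
          proof -
            have "adj R = R" unfolding R_def by (rule adj_udu[OF U])
            thus ?thesis using assoc_mult_mat_vec[OF Rc Rc v] by simp
          qed
          also have "R * R = H" unfolding R_def Hd udu_mult[OF U] rr ..
          finally show ?thesis .
        qed
        finally have "complex_of_real (\<Sum>i<n. (cmod (w $ i))^2) = conjugate v \<bullet> (H *\<^sub>v v)"
          unfolding csq_nonneg[OF wc] .
        thus ?thesis by (metis Re_complex_of_real)
      qed
      finally have "Re (conjugate v \<bullet> (P *\<^sub>v v)) \<le> \<rho> * Re (conjugate v \<bullet> (H *\<^sub>v v))" .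
      also have "\<dots> \<le> C * Re (conjugate v \<bullet> (H *\<^sub>v v))" by (rule mult_right_mono[OF C\<rho> qHnn[OF v]])
      finally show ?thesis unfolding ReCHP[OF v] by simp
    qed
    thus ?thesis unfolding loewner_le_def psd_def using Hc Pc hCHP by auto
  qed
  have dir2: "\<rho> \<le> C" if le: "loewner_le n P (complex_of_real C \<cdot>\<^sub>m H)" for C
  proof -
    have nn: "0 \<le> C * Re (conjugate v \<bullet> (H *\<^sub>v v)) - Re (conjugate v \<bullet> (P *\<^sub>v v))" if v: "v \<in> carrier_vec n" for v
      using le v ReCHP[OF v, of C] unfolding loewner_le_def psd_def by auto
    define e0 where "e0 = (unit_vec n 0 :: complex vec)"
    have e0c: "e0 \<in> carrier_vec n" unfolding e0_def by simp
    have He0: "Re (conjugate e0 \<bullet> (H *\<^sub>v e0)) \<ge> c 0"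
    proof -
      have mem: "(0, []) \<in> hset N K0" using N1 unfolding hset_def lists_len_def by auto
      have t0: "(\<Sum>j<n. cnj (hw c w (0, []) j) * e0 $ j) = complex_of_real (sqrt (c 0))"
      proof -
        have "(\<Sum>j<n. cnj (hw c w (0, []) j) * e0 $ j) = (\<Sum>j\<in>{0}. cnj (hw c w (0, []) j) * e0 $ j)"
          by (rule sum.mono_neutral_right) (use n0 in \<open>auto simp: e0_def\<close>)
        thus ?thesis using n0 by (simp add: e0_def hw_def monom_def)
      qed
      have "c 0 = (cmod (\<Sum>j<n. cnj (hw c w (0, []) j) * e0 $ j))^2"
        unfolding t0 using cpos N1 by (simp add: less_imp_le)
      also have "\<dots> \<le> (\<Sum>jt\<in>hset N K0. (cmod (\<Sum>j<n. cnj (hw c w jt j) * e0 $ j))^2)"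
        by (rule member_le_sum[OF mem _ finite_hset[OF finK0], of "\<lambda>jt. (cmod (\<Sum>j<n. cnj (hw c w jt j) * e0 $ j))^2"]) simp
      also have "\<dots> = Re (conjugate e0 \<bullet> (H *\<^sub>v e0))" unfolding Hg qf_gram[OF e0c] by simp
      finally show ?thesis .
    qed
    have C0: "C \<ge> 0"
    proof (rule ccontr)
      assume "\<not> C \<ge> 0"
      hence "C * Re (conjugate e0 \<bullet> (H *\<^sub>v e0)) < 0" using He0 cpos N1
        by (intro mult_neg_pos) auto
      thus False using nn[OF e0c] qPnn[OF e0c] by simp
    qed
    define x where "x = col V i0"
    have xc: "x \<in> carrier_vec n" unfolding x_def by (rule col_carrier'[OF Vc])
    have Vx: "adj V *\<^sub>v x = unit_vec n i0" unfolding x_def by (rule unitary_adj_mult_col[OF V i0])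
    have Sxc: "S *\<^sub>v x \<in> carrier_vec n" using Sc xc by simp
    have qPSx: "Re (conjugate (S *\<^sub>v x) \<bullet> (P *\<^sub>v (S *\<^sub>v x))) = \<rho>"
    proof -
      have "conjugate (S *\<^sub>v x) \<bullet> (P *\<^sub>v (S *\<^sub>v x)) = conjugate x \<bullet> (K *\<^sub>v x)" using qK[OF xc] by simp
      also have "\<dots> = (\<Sum>i<n. complex_of_real (l i * (cmod (unit_vec n i0 $ i))^2))"
        unfolding Kl qf_udu[OF V xc] Vx ..
      finally show ?thesis using sum_unit[OF i0, of l] \<rho>i0 by (simp add: Re_sum)
    qed
    have qHSx: "Re (conjugate (S *\<^sub>v x) \<bullet> (H *\<^sub>v (S *\<^sub>v x))) \<le> 1"
    proof -
      define q where "q i = s i * d i * s i" for i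
      have SHS: "S * H * S = udu n U q" unfolding S_def Hd q_def udu_mult[OF U] ..
      have "conjugate (S *\<^sub>v x) \<bullet> (H *\<^sub>v (S *\<^sub>v x)) = conjugate x \<bullet> ((S * H * S) *\<^sub>v x)"
        using psd_congr(2)[OF psdH Sc hS xc] by simp
      also have "\<dots> = (\<Sum>i<n. complex_of_real (q i * (cmod ((adj U *\<^sub>v x) $ i))^2))"
        unfolding SHS by (rule qf_udu[OF U xc])
      finally have "Re (conjugate (S *\<^sub>v x) \<bullet> (H *\<^sub>v (S *\<^sub>v x))) = (\<Sum>i<n. q i * (cmod ((adj U *\<^sub>v x) $ i))^2)"
        by (simp add: Re_sum)
      also have "\<dots> \<le> (\<Sum>i<n. 1 * (cmod ((adj U *\<^sub>v x) $ i))^2)"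
      proof (rule sum_mono)
        fix i assume i: "i \<in> {..<n}"
        have "q i \<le> 1" unfolding q_def s_def using d i
          by (cases "d i = 0") (auto simp: real_sqrt_inverse field_simps)
        thus "q i * (cmod ((adj U *\<^sub>v x) $ i))^2 \<le> 1 * (cmod ((adj U *\<^sub>v x) $ i))^2"
          by (intro mult_right_mono) auto
      qed
      also have "\<dots> = (\<Sum>i<n. (cmod (x $ i))^2)" using norm_pres[OF U xc] by simp
      also have "\<dots> = (\<Sum>i<n. 1 * (cmod (unit_vec n i0 $ i))^2)" using norm_pres[OF V xc] Vx by simp
      also have "\<dots> = 1" using sum_unit[OF i0, of "\<lambda>_. 1"] by simp
      finally show ?thesis .
    qed
    have "\<rho> \<le> C * Re (conjugate (S *\<^sub>v x) \<bullet> (H *\<^sub>v (S *\<^sub>v x)))" using nn[OF Sxc] qPSx by simp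
    also have "\<dots> \<le> C * 1" by (rule mult_left_mono[OF qHSx C0])
    finally show ?thesis by simp
  qed
  show ?thesis unfolding crit_set_def
    using dir1 dir2 n_def H_def P_def \<rho>_def K_def mpS[symmetric] by auto
qed

lemma crit_const_main:
  fixes N M :: nat and c :: "nat \<Rightarrow> real" and A :: "complex mat"
  assumes N1: "N \<ge> 1" and cpos: "\<forall>j<N. c j > 0" and A: "psd N A"
  shows "crit_const N (hc N c) (\<lambda>z. z ^ M) A =
    spectral_radius (mp_half (entrywise (hc N c) A) * entrywise (\<lambda>z. z ^ M) A * mp_half (entrywise (hc N c) A))"
    "crit_const N (hc N c) (\<lambda>z. z ^ M) A \<in> crit_set N (hc N c) (\<lambda>z. z ^ M) A"
    "\<And>C. C \<in> crit_set N (hc N c) (\<lambda>z. z ^ M) A \<Longrightarrow> crit_const N (hc N c) (\<lambda>z. z ^ M) A \<le> C"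
proof -
  note m = main1[OF N1 cpos A, of M]
  have e: "{C. spectral_radius (mp_half (entrywise (hc N c) A) * entrywise (\<lambda>z. z ^ M) A * mp_half (entrywise (hc N c) A)) \<le> C}
     = {spectral_radius (mp_half (entrywise (hc N c) A) * entrywise (\<lambda>z. z ^ M) A * mp_half (entrywise (hc N c) A))..}"
    by auto
  show 1: "crit_const N (hc N c) (\<lambda>z. z ^ M) A =
    spectral_radius (mp_half (entrywise (hc N c) A) * entrywise (\<lambda>z. z ^ M) A * mp_half (entrywise (hc N c) A))"
    unfolding crit_const_def m e by simp
  show "crit_const N (hc N c) (\<lambda>z. z ^ M) A \<in> crit_set N (hc N c) (\<lambda>z. z ^ M) A"
    unfolding m 1 by simp
  fix C assume "C \<in> crit_set N (hc N c) (\<lambda>z. z ^ M) A"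
  thus "crit_const N (hc N c) (\<lambda>z. z ^ M) A \<le> C" unfolding m 1 by simp
qed

lemma outer_carrier[simp]: "u \<in> carrier_vec n \<Longrightarrow> outer u \<in> carrier_mat n n"
  by (simp add: outer_def)

lemma outer_index: "u \<in> carrier_vec n \<Longrightarrow> i < n \<Longrightarrow> j < n \<Longrightarrow> outer u $$ (i,j) = u $ i * cnj (u $ j)"
  by (simp add: outer_def)

lemma outer_gram: "u \<in> carrier_vec n \<Longrightarrow> outer u = gram n {()} (\<lambda>_ i. u $ i)"
  by (rule eq_matI) (auto simp: outer_def)

lemma psd_outer: "u \<in> carrier_vec n \<Longrightarrow> psd n (outer u)"
  using outer_gram psd_gram by metis

lemma entrywise_pow_outer: assumes u: "u \<in> carrier_vec n"
  shows "entrywise (\<lambda>z. z ^ M) (outer u) = outer (vpow u M)"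
  by (rule eq_matI) (use u in \<open>auto simp: outer_def entrywise_def vpow_def power_mult_distrib\<close>)

lemma outer_mult_vec: assumes y: "y \<in> carrier_vec n" and z: "z \<in> carrier_vec n"
  shows "outer y *\<^sub>v z = (conjugate y \<bullet> z) \<cdot>\<^sub>v y"
proof (rule eq_vecI)
  fix i assume "i < dim_vec ((conjugate y \<bullet> z) \<cdot>\<^sub>v y)"
  hence i: "i < n" using y by simp
  have "(outer y *\<^sub>v z) $ i = (\<Sum>j<n. y $ i * cnj (y $ j) * z $ j)"
    using mult_vec_entry[OF outer_carrier[OF y] z i] outer_index[OF y i] by simp
  also have "\<dots> = (conjugate y \<bullet> z) * y $ i"
    using y z by (simp add: scalar_prod_def atLeast0LessThan sum_distrib_left sum_distrib_right ac_simps)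
  finally show "(outer y *\<^sub>v z) $ i = ((conjugate y \<bullet> z) \<cdot>\<^sub>v y) $ i" using i y by simp
qed (use y in \<open>auto simp: outer_def\<close>)

lemma conj_outer: assumes S: "S \<in> carrier_mat n n" and hS: "adj S = S" and x: "x \<in> carrier_vec n"
  shows "S * outer x * S = outer (S *\<^sub>v x)"
proof (rule eq_matI)
  fix i j assume "i < dim_row (outer (S *\<^sub>v x))" "j < dim_col (outer (S *\<^sub>v x))"
  hence i: "i < n" and j: "j < n" using S by (auto simp: outer_def)
  have SO: "(S * outer x) $$ (i,l) = (S *\<^sub>v x) $ i * cnj (x $ l)" if l: "l < n" for l
  proof -
    have "(S * outer x) $$ (i,l) = (\<Sum>k<n. S $$ (i,k) * (x $ k * cnj (x $ l)))"
      using mult_entry[OF S outer_carrier[OF x] i l] outer_index[OF x _ l] by simp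
    also have "\<dots> = (S *\<^sub>v x) $ i * cnj (x $ l)"
      using mult_vec_entry[OF S x i] by (simp add: sum_distrib_right sum_distrib_left mult.left_commute mult.commute)
    finally show ?thesis .
  qed
  have Sji: "S $$ (l,j) = cnj (S $$ (j,l))" if l: "l < n" for l
  proof -
    have "S $$ (l,j) = adj S $$ (l,j)" using hS by simp
    thus ?thesis using S l j by simp
  qed
  have "(S * outer x * S) $$ (i,j) = (\<Sum>l<n. (S * outer x) $$ (i,l) * S $$ (l,j))"
    by (rule mult_entry[OF mult_carrier_mat[OF S outer_carrier[OF x]] S i j])
  also have "\<dots> = (\<Sum>l<n. (S *\<^sub>v x) $ i * (cnj (x $ l) * cnj (S $$ (j,l))))"
    using SO Sji by (auto simp: ac_simps intro!: sum.cong)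
  also have "\<dots> = (S *\<^sub>v x) $ i * cnj ((S *\<^sub>v x) $ j)"
    using mult_vec_entry[OF S x j] by (simp add: sum_distrib_left cnj_sum ac_simps)
  also have "\<dots> = outer (S *\<^sub>v x) $$ (i,j)" using outer_index[OF _ i j, of "S *\<^sub>v x"] S x by simp
  finally show "(S * outer x * S) $$ (i,j) = outer (S *\<^sub>v x) $$ (i,j)" .
qed (use S x in \<open>auto simp: outer_def\<close>)

lemma spectral_radius_outer: assumes y: "y \<in> carrier_vec n" and n: "n > 0"
  shows "spectral_radius (outer y) = (\<Sum>i<n. (cmod (y $ i))^2)"
proof -
  define \<sigma> where "\<sigma> = (\<Sum>i<n. (cmod (y $ i))^2)"
  have yy: "conjugate y \<bullet> y = complex_of_real \<sigma>" unfolding \<sigma>_def by (rule csq_nonneg[OF y])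
  have \<sigma>0: "\<sigma> \<ge> 0" unfolding \<sigma>_def by (simp add: sum_nonneg)
  note sr = spectral_radius_mem_max[OF outer_carrier[OF y] n]
  have spec: "k = 0 \<or> k = complex_of_real \<sigma>" if k: "k \<in> spectrum (outer y)" for k
  proof -
    obtain z where z: "z \<in> carrier_vec n" and z0: "z \<noteq> 0\<^sub>v n" and Oz: "outer y *\<^sub>v z = k \<cdot>\<^sub>v z"
      using k outer_carrier[OF y] unfolding spectrum_def eigenvalue_def eigenvector_def by auto
    have eq: "(conjugate y \<bullet> z) \<cdot>\<^sub>v y = k \<cdot>\<^sub>v z" using Oz outer_mult_vec[OF y z] by simp
    show ?thesis
    proof (cases "k = 0")
      case False
      have yz: "conjugate y \<bullet> z \<noteq> 0"
      proof
        assume "conjugate y \<bullet> z = 0"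
        moreover have "0 \<cdot>\<^sub>v y = 0\<^sub>v n" using y by (intro eq_vecI) auto
        ultimately have "k \<cdot>\<^sub>v z = 0\<^sub>v n" using eq by simp
        hence "z = 0\<^sub>v n"
        proof (intro eq_vecI)
          fix i assume h: "k \<cdot>\<^sub>v z = 0\<^sub>v n" and "i < dim_vec (0\<^sub>v n :: complex vec)"
          hence i: "i < n" by simp
          have "(k \<cdot>\<^sub>v z) $ i = 0" using h i by simp
          thus "z $ i = (0\<^sub>v n :: complex vec) $ i" using False i z by simp
        qed (use z in simp)
        thus False using z0 by simp
      qed
      have "conjugate y \<bullet> ((conjugate y \<bullet> z) \<cdot>\<^sub>v y) = conjugate y \<bullet> (k \<cdot>\<^sub>v z)" using eq by simp
      hence "(conjugate y \<bullet> z) * complex_of_real \<sigma> = k * (conjugate y \<bullet> z)" using y z yy by simp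
      hence "k = complex_of_real \<sigma>" using yz by simp
      thus ?thesis by simp
    qed simp
  qed
  obtain k where k: "k \<in> spectrum (outer y)" and kr: "spectral_radius (outer y) = norm k" using sr(1) by auto
  have "spectral_radius (outer y) = \<sigma>"
  proof (cases "\<sigma> = 0")
    case True
    then show ?thesis using spec[OF k] kr by auto
  next
    case False
    have "y \<noteq> 0\<^sub>v n" using False yy y by auto
    have "outer y *\<^sub>v y = complex_of_real \<sigma> \<cdot>\<^sub>v y" using outer_mult_vec[OF y y] yy by simp
    hence "complex_of_real \<sigma> \<in> spectrum (outer y)"
      using \<open>y \<noteq> 0\<^sub>v n\<close> y outer_carrier[OF y] unfolding spectrum_def eigenvalue_def eigenvector_def
      by (auto simp: outer_def)
    hence "\<sigma> \<le> spectral_radius (outer y)" using sr(2) \<sigma>0 by force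
    thus ?thesis using spec[OF k] kr \<sigma>0 by auto
  qed
  thus ?thesis unfolding \<sigma>_def .
qed

definition vand :: "nat \<Rightarrow> complex vec \<Rightarrow> complex mat" where
  "vand N u = mat N N (\<lambda>(i,k). u $ i ^ (N - 1 - k))"

lemma vand_carrier[simp]: "vand N u \<in> carrier_mat N N" by (simp add: vand_def)
lemma vand_dims[simp]: "dim_row (vand N u) = N" "dim_col (vand N u) = N" by (auto simp: vand_def)

lemma vand_det_nz:
  assumes u: "u \<in> carrier_vec N" and inj: "inj_on (\<lambda>i. u $ i) {..<N}"
  shows "det (vand N u) \<noteq> 0"
proof
  assume "det (vand N u) = 0"
  then obtain a where a: "a \<in> carrier_vec N" and a0: "a \<noteq> 0\<^sub>v N" and Wa: "vand N u *\<^sub>v a = 0\<^sub>v N"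
    using det_0_iff_vec_prod_zero[OF vand_carrier] by blast
  define p where "p = (\<Sum>k<N. Polynomial.monom (a $ k) (N - 1 - k))"
  have polyp: "poly p x = (\<Sum>k<N. a $ k * x ^ (N - 1 - k))" for x
    unfolding p_def by (simp add: poly_sum poly_monom)
  have root: "poly p (u $ i) = 0" if i: "i < N" for i
  proof -
    have "(vand N u *\<^sub>v a) $ i = (\<Sum>k<N. vand N u $$ (i,k) * a $ k)"
      by (rule mult_vec_entry[OF vand_carrier a i])
    also have "\<dots> = (\<Sum>k<N. u $ i ^ (N - 1 - k) * a $ k)"
      by (rule sum.cong) (use i in \<open>auto simp: vand_def\<close>)
    finally have "(\<Sum>k<N. u $ i ^ (N - 1 - k) * a $ k) = (vand N u *\<^sub>v a) $ i" ..
    also have "\<dots> = 0" using Wa i by simp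
    finally have "(\<Sum>k<N. u $ i ^ (N - 1 - k) * a $ k) = 0" .
    thus ?thesis unfolding polyp by (simp add: ac_simps)
  qed
  have degp: "degree p \<le> N - 1" unfolding p_def
    by (rule degree_sum_le) (auto intro: order.trans[OF degree_monom_le])
  have card: "card ((\<lambda>i. u $ i) ` {..<N}) = N" using card_image[OF inj] by simp
  have N0: "N > 0" using a0 a by (cases N) (auto simp: vec_eq_iff)
  have "p = 0"
    by (rule poly_eqI_degree[of "(\<lambda>i. u $ i) ` {..<N}"]) (use root degp card N0 in auto)
  have "a $ k = 0" if k: "k < N" for k
  proof -
    have "coeff p (N - 1 - k) = (\<Sum>k'<N. if N - 1 - k' = N - 1 - k then a $ k' else 0)"
      unfolding p_def by (simp add: coeff_sum coeff_monom)
    also have "\<dots> = (\<Sum>k'\<in>{k}. if N - 1 - k' = N - 1 - k then a $ k' else 0)"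
      by (rule sum.mono_neutral_right) (use k in auto)
    finally have "coeff p (N - 1 - k) = a $ k" by simp
    thus ?thesis using \<open>p = 0\<close> by simp
  qed
  hence "a = 0\<^sub>v N" using a by (intro eq_vecI) auto
  thus False using a0 by simp
qed

lemma hc_outer_decomp:
  assumes u: "u \<in> carrier_vec N"
  shows "entrywise (hc N c) (outer u) = vand N u * dmat N (\<lambda>k. c (N - 1 - k)) * adj (vand N u)"
proof (rule eq_matI)
  fix i j assume "i < dim_row (vand N u * dmat N (\<lambda>k. c (N - 1 - k)) * adj (vand N u))"
    "j < dim_col (vand N u * dmat N (\<lambda>k. c (N - 1 - k)) * adj (vand N u))"
  hence i: "i < N" and j: "j < N" by auto
  have "(vand N u * dmat N (\<lambda>k. c (N - 1 - k)) * adj (vand N u)) $$ (i,j) =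
     (\<Sum>k<N. u $ i ^ (N - Suc k) * complex_of_real (c (N - Suc k)) * cnj (u $ j ^ (N - Suc k)))"
  proof -
    have "(vand N u * dmat N (\<lambda>k. c (N - 1 - k)) * adj (vand N u)) $$ (i,j) =
      (\<Sum>l<N. vand N u $$ (i,l) * complex_of_real (c (N - 1 - l)) * cnj (vand N u $$ (j,l)))"
      by (rule udu_entry[OF vand_carrier i j])
    also have "\<dots> = (\<Sum>k<N. u $ i ^ (N - Suc k) * complex_of_real (c (N - Suc k)) * cnj (u $ j ^ (N - Suc k)))"
      by (rule sum.cong) (use i j in \<open>auto simp: vand_def\<close>)
    finally show ?thesis .
  qed
  also have "\<dots> = (\<Sum>p<N. u $ i ^ p * complex_of_real (c p) * cnj (u $ j ^ p))"
    by (rule sum.nat_diff_reindex)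
  also have "\<dots> = entrywise (hc N c) (outer u) $$ (i,j)"
    using u i j by (auto simp: entrywise_def hc_def outer_def power_mult_distrib ac_simps intro!: sum.cong)
  finally show "entrywise (hc N c) (outer u) $$ (i,j) = (vand N u * dmat N (\<lambda>k. c (N - 1 - k)) * adj (vand N u)) $$ (i,j)" ..
qed (use u in \<open>auto simp: entrywise_def outer_def\<close>)

lemma mp_inverse_inv: assumes H: "H \<in> carrier_mat n n" and X: "X \<in> carrier_mat n n"
  and HX: "H * X = 1\<^sub>m n" and XH: "X * H = 1\<^sub>m n"
  shows "mp_inverse H = X"
  by (rule mp_inverse_eq[OF H X]) (use H X HX XH in auto)

lemma det_perm_cols: assumes A: "A \<in> carrier_mat n n" and p: "p permutes {0..<n}"
  shows "det (mat n n (\<lambda>(i,j). A $$ (i, p j))) = signof p * det A"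
proof -
  have "mat n n (\<lambda>(i,j). A $$ (i, p j)) = transpose_mat (mat n n (\<lambda>(i,j). transpose_mat A $$ (p i, j)))"
    using A p by (intro eq_matI) (auto simp: permutes_in_image)
  hence "det (mat n n (\<lambda>(i,j). A $$ (i, p j))) = det (mat n n (\<lambda>(i,j). transpose_mat A $$ (p i, j)))"
    using det_transpose[of "mat n n (\<lambda>(i,j). transpose_mat A $$ (p i, j))" n] by simp
  also have "\<dots> = signof p * det (transpose_mat A)" by (rule det_permute_rows[OF _ p]) (use A in simp)
  also have "\<dots> = signof p * det A" using det_transpose[OF A] by simp
  finally show ?thesis .
qed

lemma mp_half_props: assumes H: "psd n H"
  shows "mp_half H \<in> carrier_mat n n" "adj (mp_half H) = mp_half H" "mp_half H * mp_half H = mp_inverse H"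
proof -
  obtain U d where U: "unitary n U" and Hd: "H = udu n U d" and d: "\<forall>i<n. d i \<ge> 0"
    using psd_decomp[OF H] by auto
  have S: "mp_half H = udu n U (\<lambda>i. sqrt (inverse (d i)))" unfolding Hd by (rule mp_half_udu[OF U d])
  show "mp_half H \<in> carrier_mat n n" unfolding S using U by simp
  show "adj (mp_half H) = mp_half H" unfolding S by (rule adj_udu[OF U])
  have "mp_half H * mp_half H = udu n U (\<lambda>i. sqrt (inverse (d i)) * sqrt (inverse (d i)))"
    unfolding S udu_mult[OF U] ..
  also have "\<dots> = udu n U (\<lambda>i. inverse (d i))" by (rule udu_cong) (use d in auto)
  also have "\<dots> = mp_inverse H" unfolding Hd by (rule mp_inverse_udu[OF U, symmetric])
  finally show "mp_half H * mp_half H = mp_inverse H" .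
qed

lemma psd_hc_outer: assumes u: "u \<in> carrier_vec N" and c: "\<forall>j<N. c j \<ge> 0"
  shows "psd N (entrywise (hc N c) (outer u))"
proof -
  have "entrywise (hc N c) (gram N {()} (\<lambda>_ i. u $ i)) = gram N (hset N {()}) (hw c (\<lambda>_ i. u $ i))"
    by (rule entrywise_hc_gram[OF _ c]) simp
  thus ?thesis unfolding outer_gram[OF u] by (simp add: psd_gram)
qed

lemma part2a:
  fixes N M :: nat and c :: "nat \<Rightarrow> real" and u :: "complex vec"
  assumes N1: "N \<ge> 1" and cpos: "\<forall>j<N. c j > 0" and u: "u \<in> carrier_vec N"
  shows "complex_of_real (crit_const N (hc N c) (\<lambda>z. z ^ M) (outer u)) =
    conjugate (vpow u M) \<bullet> (mp_inverse (entrywise (hc N c) (outer u)) *\<^sub>v vpow u M)"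
proof -
  define H where "H = entrywise (hc N c) (outer u)"
  define x where "x = vpow u M"
  have xc: "x \<in> carrier_vec N" unfolding x_def vpow_def using u by simp
  have psdH: "psd N H" unfolding H_def by (rule psd_hc_outer[OF u]) (use cpos in \<open>auto simp: less_imp_le\<close>)
  define S where "S = mp_half H"
  note Sp = mp_half_props[OF psdH, folded S_def]
  have Sxc: "S *\<^sub>v x \<in> carrier_vec N" using Sp(1) xc by simp
  have "crit_const N (hc N c) (\<lambda>z. z ^ M) (outer u) = spectral_radius (S * outer x * S)"
    unfolding crit_const_main(1)[OF N1 cpos psd_outer[OF u]] S_def H_def x_def entrywise_pow_outer[OF u] ..
  also have "\<dots> = spectral_radius (outer (S *\<^sub>v x))" unfolding conj_outer[OF Sp(1,2) xc] ..
  also have "\<dots> = (\<Sum>i<N. (cmod ((S *\<^sub>v x) $ i))^2)" by (rule spectral_radius_outer[OF Sxc]) (use N1 in simp)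
  finally have 1: "complex_of_real (crit_const N (hc N c) (\<lambda>z. z ^ M) (outer u)) = conjugate (S *\<^sub>v x) \<bullet> (S *\<^sub>v x)"
    unfolding csq_nonneg[OF Sxc] by simp
  have "conjugate x \<bullet> (mp_inverse H *\<^sub>v x) = conjugate x \<bullet> (S *\<^sub>v (S *\<^sub>v x))"
    unfolding Sp(3)[symmetric] using assoc_mult_mat_vec[OF Sp(1) Sp(1) xc] by simp
  also have "\<dots> = conjugate (S *\<^sub>v x) \<bullet> (S *\<^sub>v x)" using adj_sprod[OF Sp(1) xc Sxc] Sp(2) by simp
  finally show ?thesis using 1 unfolding H_def x_def by simp
qed

lemma shift_permutes: fixes m N :: nat assumes m: "m < N"
  shows "(\<lambda>k. if k = 0 then m else if k \<le> m then k - 1 else k) permutes {0..<N}"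
proof (rule bij_imp_permutes)
  let ?s = "\<lambda>k::nat. if k = 0 then m else if k \<le> m then k - 1 else k"
  let ?t = "\<lambda>k::nat. if k = m then 0 else if k < m then k + 1 else k"
  show "bij_betw ?s {0..<N} {0..<N}"
    by (rule bij_betw_byWitness[where f' = ?t]) (use m in auto)
  show "\<And>x. x \<notin> {0..<N} \<Longrightarrow> ?s x = x" using m by auto
qed

lemma unitary_one: "unitary n (1\<^sub>m n)" by (simp add: unitary_def)

lemma udu_one: "udu n (1\<^sub>m n) e = dmat n e" by (simp add: udu_def)

lemma part2b:
  fixes N M :: nat and c :: "nat \<Rightarrow> real" and u :: "complex vec"
  assumes N1: "N \<ge> 1" and MN: "M \<ge> N" and cpos: "\<forall>j<N. c j > 0" and u: "u \<in> carrier_vec N"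
    and inj: "inj_on (\<lambda>i. u $ i) {..<N}"
  shows "conjugate (vpow u M) \<bullet> (mp_inverse (entrywise (hc N c) (outer u)) *\<^sub>v vpow u M) =
    complex_of_real (\<Sum>j<N. (cmod (schur_eval N (hook M N j) (\<lambda>i. u $ i)))\<^sup>2 / c j)"
proof -
  define W where "W = vand N u"
  have Wc: "W \<in> carrier_mat N N" unfolding W_def by simp
  define dW where "dW = det W"
  have dW0: "dW \<noteq> 0" unfolding dW_def W_def by (rule vand_det_nz[OF u inj])
  define Wi where "Wi = (1 / dW) \<cdot>\<^sub>m adj_mat W"
  have Wic: "Wi \<in> carrier_mat N N" unfolding Wi_def using adj_mat(1)[OF Wc] by simp
  have sm: "(1 / dW) \<cdot>\<^sub>m (dW \<cdot>\<^sub>m 1\<^sub>m N) = 1\<^sub>m N" using dW0 by (intro eq_matI) auto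
  have WWi: "W * Wi = 1\<^sub>m N" unfolding Wi_def
    using mult_smult_distrib[OF Wc adj_mat(1)[OF Wc]] adj_mat(2)[OF Wc] sm unfolding dW_def by simp
  have WiW: "Wi * W = 1\<^sub>m N" unfolding Wi_def
    using mult_smult_assoc_mat[OF adj_mat(1)[OF Wc] Wc] adj_mat(3)[OF Wc] sm unfolding dW_def by simp
  define c' where "c' k = c (N - 1 - k)" for k
  have c'pos: "c' k > 0" if "k < N" for k unfolding c'_def using cpos that by auto
  define D where "D = dmat N c'"
  define Di where "Di = dmat N (\<lambda>k. inverse (c' k))"
  have DDi: "D * Di = 1\<^sub>m N" and DiD: "Di * D = 1\<^sub>m N"
  proof -
    have "D * Di = dmat N (\<lambda>k. c' k * inverse (c' k))" unfolding D_def Di_def by (rule dmat_mult)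
    also have "\<dots> = 1\<^sub>m N" by (rule eq_matI) (use c'pos in \<open>auto simp: less_imp_neq[symmetric]\<close>)
    finally show "D * Di = 1\<^sub>m N" .
    have "Di * D = dmat N (\<lambda>k. inverse (c' k) * c' k)" unfolding D_def Di_def by (rule dmat_mult)
    also have "\<dots> = 1\<^sub>m N" by (rule eq_matI) (use c'pos in \<open>auto simp: less_imp_neq[symmetric]\<close>)
    finally show "Di * D = 1\<^sub>m N" .
  qed
  have Dc: "D \<in> carrier_mat N N" and Dic: "Di \<in> carrier_mat N N" unfolding D_def Di_def by auto
  define H where "H = entrywise (hc N c) (outer u)"
  have Hd: "H = W * D * adj W" unfolding H_def W_def D_def c'_def by (rule hc_outer_decomp[OF u])
  have Hc: "H \<in> carrier_mat N N" unfolding Hd using Wc Dc by (metis adj_carrier mult_carrier_mat)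
  define X where "X = adj Wi * Di * Wi"
  have Xc: "X \<in> carrier_mat N N" unfolding X_def using Wic Dic by (metis adj_carrier mult_carrier_mat)
  note cs = assoc_mult_mat[of _ N N _ N _ N] mult_carrier_mat[of _ N N _ N]
  have aa1: "adj W * adj Wi = 1\<^sub>m N" using adj_mult[OF Wic Wc, symmetric] WiW by simp
  have aa2: "adj Wi * adj W = 1\<^sub>m N" using adj_mult[OF Wc Wic, symmetric] WWi by simp
  have HX: "H * X = 1\<^sub>m N"
  proof -
    have "H * X = W * (D * ((adj W * adj Wi) * (Di * Wi)))" unfolding Hd X_def using Wc Dc Wic Dic by (simp add: cs)
    also have "\<dots> = W * ((D * Di) * Wi)" unfolding aa1 using Dc Dic Wic by (simp add: cs)
    also have "\<dots> = 1\<^sub>m N" unfolding DDi using Wic WWi by simp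
    finally show ?thesis .
  qed
  have XH: "X * H = 1\<^sub>m N"
  proof -
    have "X * H = adj Wi * (Di * ((Wi * W) * (D * adj W)))" unfolding Hd X_def using Wc Dc Wic Dic by (simp add: cs)
    also have "\<dots> = adj Wi * ((Di * D) * adj W)" unfolding WiW using Dc Dic Wc by (simp add: cs)
    also have "\<dots> = 1\<^sub>m N" unfolding DiD using Wc aa2 by simp
    finally show ?thesis .
  qed
  have mpX: "mp_inverse H = X" by (rule mp_inverse_inv[OF Hc Xc HX XH])
  define x where "x = vpow u M"
  have xc: "x \<in> carrier_vec N" unfolding x_def vpow_def using u by simp
  define a where "a = Wi *\<^sub>v x"
  have ac: "a \<in> carrier_vec N" unfolding a_def using Wic xc by simp
  have Wa: "W *\<^sub>v a = x" unfolding a_def using assoc_mult_mat_vec[OF Wc Wic xc] WWi xc by simp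
  have qf: "conjugate x \<bullet> (X *\<^sub>v x) = (\<Sum>k<N. complex_of_real (inverse (c' k) * (cmod (a $ k))^2))"
  proof -
    have "X *\<^sub>v x = adj Wi *\<^sub>v (Di *\<^sub>v a)" unfolding X_def a_def
      using Wic Dic xc by (simp add: assoc_mult_mat_vec[of _ N N _ N] mult_carrier_mat[of _ N N _ N])
    hence "conjugate x \<bullet> (X *\<^sub>v x) = conjugate a \<bullet> (Di *\<^sub>v a)"
      using adj_sprod[OF adj_carrier[OF Wic] xc, of "Di *\<^sub>v a"] Dic ac unfolding a_def by simp
    also have "\<dots> = (\<Sum>k<N. complex_of_real (inverse (c' k) * (cmod ((adj (1\<^sub>m N) *\<^sub>v a) $ k))^2))"
      using qf_udu[OF unitary_one ac, of "\<lambda>k. inverse (c' k)"] unfolding udu_one Di_def .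
    finally show ?thesis using ac by simp
  qed
  have cram: "a $ k = det (replace_col W x k) / dW" if k: "k < N" for k
    using cramer_lemma_mat[OF Wc ac k] Wa dW0 unfolding dW_def by (simp add: field_simps)
  have schur: "cmod (schur_eval N (hook M N j) (\<lambda>i. u $ i)) = cmod (a $ (N - 1 - j))" if j: "j < N" for j
  proof -
    define m where "m = N - 1 - j"
    have m: "m < N" unfolding m_def using j N1 by simp
    define \<sigma> where "\<sigma> k = (if k = 0 then m else if k \<le> m then k - 1 else k)" for k
    have \<sigma>: "\<sigma> permutes {0..<N}" unfolding \<sigma>_def by (rule shift_permutes[OF m])
    define R where "R = replace_col W x m"
    have Rc: "R \<in> carrier_mat N N" unfolding R_def replace_col_def using Wc by auto
    have Z: "mat N N (\<lambda>(i,k). u $ i ^ (hook M N j k + (N - 1 - k))) = mat N N (\<lambda>(i,k). R $$ (i, \<sigma> k))"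
    proof (rule cong_mat[OF refl refl])
      fix i k assume i: "i < N" and k: "k < N"
      have sk: "\<sigma> k < N" using k m unfolding \<sigma>_def by auto
      show "(case (i, k) of (i, k) \<Rightarrow> u $ i ^ (hook M N j k + (N - 1 - k))) = (case (i, k) of (i, k) \<Rightarrow> R $$ (i, \<sigma> k))"
        using i k sk Wc MN j unfolding R_def replace_col_def W_def vand_def \<sigma>_def hook_def m_def x_def vpow_def
        using u by (auto simp: Suc_diff_le)
    qed
    have "schur_eval N (hook M N j) (\<lambda>i. u $ i) = det (mat N N (\<lambda>(i,k). R $$ (i, \<sigma> k))) / dW"
      unfolding schur_eval_def Z dW_def W_def vand_def by simp
    also have "\<dots> = signof \<sigma> * det R / dW" unfolding det_perm_cols[OF Rc \<sigma>] ..
    finally have "cmod (schur_eval N (hook M N j) (\<lambda>i. u $ i)) = cmod (det R / dW)"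
      by (simp add: sign_def norm_mult)
    also have "\<dots> = cmod (a $ m)" unfolding cram[OF m] R_def ..
    finally show ?thesis unfolding m_def .
  qed
  have "conjugate x \<bullet> (mp_inverse H *\<^sub>v x) = complex_of_real (\<Sum>k<N. inverse (c' k) * (cmod (a $ k))^2)"
    unfolding mpX qf by simp
  also have "(\<Sum>k<N. inverse (c' k) * (cmod (a $ k))^2) = (\<Sum>j<N. inverse (c' (N - Suc j)) * (cmod (a $ (N - Suc j)))^2)"
    by (rule sum.nat_diff_reindex[symmetric])
  also have "\<dots> = (\<Sum>j<N. (cmod (schur_eval N (hook M N j) (\<lambda>i. u $ i)))\<^sup>2 / c j)"
    by (rule sum.cong) (auto simp: schur c'_def divide_inverse Suc_diff_Suc)
  finally show ?thesis unfolding H_def x_def .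
qed

theorem proposition3p4:
  fixes M N :: nat and c :: "nat \<Rightarrow> real"
  assumes MN: "M \<ge> N" and N1: "N \<ge> 1"
    and cpos: "\<forall>j<N. c j > 0"
  shows "(\<forall>A. psd N A \<and> A \<noteq> 0\<^sub>m N N \<longrightarrow>
            crit_const N (hc N c) (\<lambda>z. z ^ M) A \<in> crit_set N (hc N c) (\<lambda>z. z ^ M) A \<and>
            (\<forall>C \<in> crit_set N (hc N c) (\<lambda>z. z ^ M) A. crit_const N (hc N c) (\<lambda>z. z ^ M) A \<le> C) \<and>
            crit_const N (hc N c) (\<lambda>z. z ^ M) A =
              spectral_radius (mp_half (entrywise (hc N c) A) * entrywise (\<lambda>z. z ^ M) A
                               * mp_half (entrywise (hc N c) A)))
       \<and> (\<forall>u. u \<in> carrier_vec N \<and> inj_on (\<lambda>i. u $ i) {..<N} \<longrightarrow>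
            complex_of_real (crit_const N (hc N c) (\<lambda>z. z ^ M) (outer u)) =
              conjugate (vpow u M) \<bullet> (mp_inverse (entrywise (hc N c) (outer u)) *\<^sub>v vpow u M)
          \<and> conjugate (vpow u M) \<bullet> (mp_inverse (entrywise (hc N c) (outer u)) *\<^sub>v vpow u M) =
              complex_of_real (\<Sum>j<N. (cmod (schur_eval N (hook M N j) (\<lambda>i. u $ i)))\<^sup>2 / c j))"
proof -
  have p1: "\<forall>A. psd N A \<and> A \<noteq> 0\<^sub>m N N \<longrightarrow>
            crit_const N (hc N c) (\<lambda>z. z ^ M) A \<in> crit_set N (hc N c) (\<lambda>z. z ^ M) A \<and>
            (\<forall>C \<in> crit_set N (hc N c) (\<lambda>z. z ^ M) A. crit_const N (hc N c) (\<lambda>z. z ^ M) A \<le> C) \<and>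
            crit_const N (hc N c) (\<lambda>z. z ^ M) A =
              spectral_radius (mp_half (entrywise (hc N c) A) * entrywise (\<lambda>z. z ^ M) A
                               * mp_half (entrywise (hc N c) A))"
    using crit_const_main[OF N1 cpos] by blast
  have p2: "\<forall>u. u \<in> carrier_vec N \<and> inj_on (\<lambda>i. u $ i) {..<N} \<longrightarrow>
            complex_of_real (crit_const N (hc N c) (\<lambda>z. z ^ M) (outer u)) =
              conjugate (vpow u M) \<bullet> (mp_inverse (entrywise (hc N c) (outer u)) *\<^sub>v vpow u M)
          \<and> conjugate (vpow u M) \<bullet> (mp_inverse (entrywise (hc N c) (outer u)) *\<^sub>v vpow u M) =
              complex_of_real (\<Sum>j<N. (cmod (schur_eval N (hook M N j) (\<lambda>i. u $ i)))\<^sup>2 / c j)"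
    using part2a[OF N1 cpos] part2b[OF N1 MN cpos] by blast
  show ?thesis using p1 p2 by blast
qed

end
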